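(* The set of $q\in(0,1)$ for which there exists exactly one $S$-gap shift with entropy $q$ has Hausdorff dimension $1$.
   Context: For a nonempty set $S\subseteq\{0,1,2,\dots\}$, the $S$-gap shift $X(S)\subseteq\{0,1\}^{\mathbb{Z}}$ is the set of bi-infinite binary sequences in which the number of consecutive zeros between ones is always an element of $S$. The entropy of a shift $X$ is $h(X)=\lim_n\frac1n\log|\mathcal{B}_n(X)|$, where $\mathcal{B}_n(X)$ is the set of words of length $n$ occurring in points of $X$ and $\log$ is to base $2$. *)

theory Defs
  imports "HOL-Analysis.Analysis"
begin

text \<open>Points of the full shift {0,1}^Z are functions int => bool (True = 1, False = 0).\<close>
definition gap_shift :: "nat set \<Rightarrow> (int \<Rightarrow> bool) set" where
  "gap_shift S = {x. \<forall>i j. i < j \<and> x i \<and> x j \<and> (\<forall>k. i < k \<and> k < j \<longrightarrow> \<not> x k)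
                        \<longrightarrow> nat (j - i - 1) \<in> S}"

definition blocks :: "(int \<Rightarrow> bool) set \<Rightarrow> nat \<Rightarrow> bool list set" where
  "blocks X n = {w. \<exists>x\<in>X. \<exists>i::int. w = map (\<lambda>k. x (i + int k)) [0..<n]}"

definition entropy :: "(int \<Rightarrow> bool) set \<Rightarrow> real" where
  "entropy X = lim (\<lambda>n. log 2 (real (card (blocks X n))) / real n)"

definition hausdorff_measure :: "real \<Rightarrow> real set \<Rightarrow> ennreal" where
  "hausdorff_measure s A =
     (SUP \<delta>\<in>{0<..}. INF U\<in>{U :: nat \<Rightarrow> real set. A \<subseteq> (\<Union>i. U i) \<and>
                         (\<forall>i. bounded (U i) \<and> diameter (U i) \<le> \<delta>)}.
                 (\<Sum>i. ennreal (diameter (U i) powr s)))"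

definition hausdorff_dim :: "real set \<Rightarrow> real" where
  "hausdorff_dim A = Inf {s. 0 \<le> s \<and> hausdorff_measure s A = 0}"

end

theory Submission
  imports Defs "HOL-Real_Asymp.Real_Asymp"
begin

lemma subadd_iter:
  fixes a :: "nat \<Rightarrow> real"
  assumes sub: "\<And>m n. a (m + n) \<le> a m + a n"
  shows "a (q * k + r) \<le> real q * a k + a r"
proof (induction q)
  case 0 then show ?case by simp
next
  case (Suc q)
  have "a (Suc q * k + r) = a (k + (q * k + r))" by (simp add: algebra_simps)
  also have "\<dots> \<le> a k + a (q*k + r)" by (rule sub)
  also have "\<dots> \<le> a k + (real q * a k + a r)" using Suc by simp
  finally show ?case by (simp add: algebra_simps)
qed

lemma subadd_bound:
  fixes a :: "nat \<Rightarrow> real"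
  assumes sub: "\<And>m n. a (m + n) \<le> a m + a n" and nn: "\<And>n. a n \<ge> 0"
    and k: "k > 0"
  shows "\<exists>C. \<forall>n. a n \<le> real n * (a k / real k) + C"
proof -
  define C where "C = Max (a ` {..<k})"
  have C: "a r \<le> C" if "r < k" for r unfolding C_def using that by (intro Max_ge) auto
  have "a n \<le> real n * (a k / real k) + C" for n
  proof -
    have n: "n = (n div k) * k + n mod k" by simp
    have "a n \<le> real (n div k) * a k + a (n mod k)"
      by (subst n, rule subadd_iter[OF sub])
    also have "real (n div k) * a k \<le> real n * (a k / real k)"
    proof -
      have "real (n div k) * real k \<le> real n"
        by (metis of_nat_le_iff of_nat_mult div_times_less_eq_dividend)
      hence "real (n div k) \<le> real n / real k" using k by (simp add: field_simps)
      hence "real (n div k) * a k \<le> real n / real k * a k" using nn by (intro mult_right_mono) auto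
      thus ?thesis by simp
    qed
    finally show ?thesis using C[of "n mod k"] k by simp
  qed
  thus ?thesis by blast
qed

lemma fekete:
  fixes a :: "nat \<Rightarrow> real"
  assumes sub: "\<And>m n. a (m + n) \<le> a m + a n" and nn: "\<And>n. a n \<ge> 0"
  defines "L \<equiv> Inf ((\<lambda>n. a n / real n) ` {1..})"
  shows "(\<lambda>n. a n / real n) \<longlonglongrightarrow> L"
proof -
  have bdd: "bdd_below ((\<lambda>n. a n / real n) ` {1..})"
    by (rule bdd_belowI[of _ 0]) (use nn in auto)
  have low: "L \<le> a n / real n" if "n \<ge> 1" for n
    unfolding L_def using that by (intro cInf_lower bdd) auto
  show ?thesis
  proof (rule LIMSEQ_I)
    fix e :: real assume e: "e > 0"
    have "Inf ((\<lambda>n. a n / real n) ` {1..}) < L + e/2" using e L_def by simp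
    then obtain k where k: "k \<ge> 1" "a k / real k < L + e/2"
      by (subst (asm) cInf_less_iff[OF _ bdd]) auto
    obtain C where C: "\<And>n. a n \<le> real n * (a k / real k) + C"
      using subadd_bound[OF sub nn, of k] k by auto
    have C0: "C \<ge> 0" using C[of 0] nn[of 0] by simp
    obtain N where N: "real N > 2 * C / e" using reals_Archimedean2 by blast
    show "\<exists>N. \<forall>n\<ge>N. norm (a n / real n - L) < e"
    proof (intro exI[of _ "N+1"] allI impI)
      fix n assume n: "n \<ge> N + 1"
      hence n1: "n \<ge> 1" and npos: "real n > 0" by auto
      have "a n / real n \<le> a k / real k + C / real n"
        using C[of n] npos by (simp add: field_simps)
      also have "C / real n < e / 2"
      proof -
        have "2 * C / e < real n" using N n by linarith
        thus ?thesis using e npos by (simp add: field_simps)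
      qed
      finally have "a n / real n < L + e" using k by linarith
      moreover have "L \<le> a n / real n" using low n1 .
      ultimately show "norm (a n / real n - L) < e" by simp
    qed
  qed
qed

definition okw :: "nat set \<Rightarrow> bool list \<Rightarrow> bool" where
  "okw S w \<longleftrightarrow> (\<forall>i j. i < j \<and> j < length w \<and> w!i \<and> w!j \<and> (\<forall>k. i<k \<and> k<j \<longrightarrow> \<not> w!k) \<longrightarrow> j - i - 1 \<in> S)"

lemma blocks_okw:
  assumes "w \<in> blocks (gap_shift S) n"
  shows "length w = n \<and> okw S w"
proof -
  obtain x i where x: "x \<in> gap_shift S" and w: "w = map (\<lambda>k. x (i + int k)) [0..<n]"
    using assms unfolding blocks_def by auto
  have "okw S w" unfolding okw_def
  proof (intro allI impI)
    fix ii jj assume h: "ii < jj \<and> jj < length w \<and> w!ii \<and> w!jj \<and> (\<forall>k. ii<k \<and> k<jj \<longrightarrow> \<not> w!k)"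
    have key: "\<And>i j. i < j \<and> x i \<and> x j \<and> (\<forall>k. i < k \<and> k < j \<longrightarrow> \<not> x k) \<Longrightarrow> nat (j - i - 1) \<in> S"
      using x unfolding gap_shift_def by blast
    have "nat ((i + int jj) - (i + int ii) - 1) \<in> S"
    proof (rule key, rule conjI)
      show "i + int ii < i + int jj" using h by simp
      show "x (i + int ii) \<and> x (i + int jj) \<and> (\<forall>k. i + int ii < k \<and> k < i + int jj \<longrightarrow> \<not> x k)"
      proof (intro conjI allI impI)
        have "ii < n" "jj < n" using h w by auto
        thus "x (i + int ii)" "x (i + int jj)" using h w by auto
        fix k assume k: "i + int ii < k \<and> k < i + int jj"
        define kk where "kk = nat (k - i)"
        have kk: "k = i + int kk" "ii < kk" "kk < jj" using k unfolding kk_def by auto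
        have "\<not> w ! kk" using h kk by auto
        thus "\<not> x k" using kk h w by simp
      qed
    qed
    moreover have "nat ((i + int jj) - (i + int ii) - 1) = jj - ii - 1" using h by auto
    ultimately show "jj - ii - 1 \<in> S" by simp
  qed
  thus ?thesis using w by simp
qed

lemma emb_gap:
  assumes "okw S v"
  shows "(\<lambda>k::int. 0 \<le> k \<and> k < int (length v) \<and> v ! nat k) \<in> gap_shift S"
  unfolding gap_shift_def
proof (intro CollectI allI impI)
  fix i j :: int
  let ?x = "\<lambda>k::int. 0 \<le> k \<and> k < int (length v) \<and> v ! nat k"
  assume h: "i < j \<and> ?x i \<and> ?x j \<and> (\<forall>k. i < k \<and> k < j \<longrightarrow> \<not> ?x k)"
  have "nat j - nat i - 1 \<in> S" using assms unfolding okw_def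
  proof (elim allE impE)
    show "nat i < nat j \<and> nat j < length v \<and> v ! nat i \<and> v ! nat j \<and> (\<forall>k. nat i < k \<and> k < nat j \<longrightarrow> \<not> v ! k)"
    proof (intro conjI allI impI)
      fix k assume k: "nat i < k \<and> k < nat j"
      have "i < int k \<and> int k < j" using k h by auto
      hence "\<not> ?x (int k)" using h by blast
      thus "\<not> v ! k" using h k by auto
    qed (use h in auto)
  qed
  moreover have "nat (j - i - 1) = nat j - nat i - 1" using h by auto
  ultimately show "nat (j - i - 1) \<in> S" by simp
qed

lemma okw_drop: "okw S w \<Longrightarrow> okw S (drop m w)"
  unfolding okw_def
proof (intro allI impI)
  fix i j assume ok: "\<forall>i j. i < j \<and> j < length w \<and> w!i \<and> w!j \<and> (\<forall>k. i<k \<and> k<j \<longrightarrow> \<not> w!k) \<longrightarrow> j - i - 1 \<in> S"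
    and h: "i < j \<and> j < length (drop m w) \<and> drop m w ! i \<and> drop m w ! j \<and> (\<forall>k. i < k \<and> k < j \<longrightarrow> \<not> drop m w ! k)"
  have "(m + j) - (m + i) - 1 \<in> S"
  proof (rule ok[rule_format])
    show "m + i < m + j \<and> m + j < length w \<and> w ! (m + i) \<and> w ! (m + j) \<and> (\<forall>k. m + i < k \<and> k < m + j \<longrightarrow> \<not> w ! k)"
    proof (intro conjI allI impI)
      fix k assume k: "m + i < k \<and> k < m + j"
      have "i < k - m \<and> k - m < j" using k by auto
      hence "\<not> drop m w ! (k - m)" using h by blast
      thus "\<not> w ! k" using k h by auto
    qed (use h in auto)
  qed
  thus "j - i - 1 \<in> S" by simp
qed

lemma okw_cons:
  assumes ok: "okw S v" and v: "v \<noteq> []" "v ! 0" and s: "s \<in> S"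
  shows "okw S (True # replicate s False @ v)"
  unfolding okw_def
proof (intro allI impI)
  fix i j
  let ?w = "True # replicate s False @ v"
  assume h: "i < j \<and> j < length ?w \<and> ?w!i \<and> ?w!j \<and> (\<forall>k. i<k \<and> k<j \<longrightarrow> \<not> ?w!k)"
  have nth_w: "?w ! k = (if k = 0 then True else if k \<le> s then False else v ! (k - s - 1))" for k
    by (cases k) (auto simp: nth_append)
  show "j - i - 1 \<in> S"
  proof (cases "i = 0")
    case True
    have "j \<ge> s + 1"
    proof (rule ccontr)
      assume "\<not> j \<ge> s+1" thus False using h nth_w[of j] True by auto
    qed
    moreover have "j \<le> s + 1"
    proof (rule ccontr)
      assume "\<not> j \<le> s+1"
      hence "i < s + 1 \<and> s + 1 < j" using True by auto
      hence "\<not> ?w ! (s+1)" using h by blast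
      thus False using v nth_w[of "s+1"] by simp
    qed
    ultimately show ?thesis using True s by simp
  next
    case False
    hence i: "i \<ge> s + 1" using h nth_w[of i] by (auto split: if_splits)
    have "(j - s - 1) - (i - s - 1) - 1 \<in> S"
    proof (rule ok[unfolded okw_def, rule_format])
      show "i - s - 1 < j - s - 1 \<and> j - s - 1 < length v \<and> v ! (i - s - 1) \<and> v ! (j - s - 1) \<and>
        (\<forall>k. i - s - 1 < k \<and> k < j - s - 1 \<longrightarrow> \<not> v ! k)"
      proof (intro conjI allI impI)
        fix k assume k: "i - s - 1 < k \<and> k < j - s - 1"
        have "i < k + s + 1 \<and> k + s + 1 < j" using k i by auto
        hence "\<not> ?w ! (k + s + 1)" using h by blast
        thus "\<not> v ! k" using nth_w[of "k+s+1"] by simp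
      qed (use h i nth_w[of i] nth_w[of j] in auto)
    qed
    thus ?thesis using i h by (simp add: algebra_simps)
  qed
qed

lemma blocks_subset: "blocks (gap_shift S) n \<subseteq> {w. set w \<subseteq> UNIV \<and> length w = n}"
  using blocks_okw by blast

lemma blocks_finite: "finite (blocks (gap_shift S) n)"
  by (rule finite_subset[OF blocks_subset]) (rule finite_lists_length_eq, simp)

lemma zero_in_gap: "(\<lambda>_. False) \<in> gap_shift S"
  unfolding gap_shift_def by auto

lemma blocks_nonempty: "replicate n False \<in> blocks (gap_shift S) n"
  unfolding blocks_def using zero_in_gap[of S]
  by (intro CollectI bexI[of _ "\<lambda>_. False"] exI[of _ 0]) (auto simp: map_replicate_const)

lemma blocks_card_pos: "card (blocks (gap_shift S) n) \<ge> 1"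
  using blocks_nonempty[of n S] blocks_finite[of S n]
  by (metis One_nat_def Suc_leI card_gt_0_iff empty_iff)

lemma blocks_finite_gen: "finite (blocks X n)"
  by (rule finite_subset[OF _ finite_lists_length_eq[of UNIV n]]) (auto simp: blocks_def)

lemma blocks_submult:
  "card (blocks X (m + n)) \<le> card (blocks X m) * card (blocks X n)"
proof -
  have "blocks X (m + n) \<subseteq> (\<lambda>(u,v). u @ v) ` (blocks X m \<times> blocks X n)"
  proof
    fix w assume "w \<in> blocks X (m+n)"
    then obtain x i where x: "x \<in> X" and w: "w = map (\<lambda>k. x (i + int k)) [0..<m+n]"
      unfolding blocks_def by auto
    define u where "u = map (\<lambda>k. x (i + int k)) [0..<m]"
    define v where "v = map (\<lambda>k. x ((i + int m) + int k)) [0..<n]"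
    have "w = u @ v" unfolding w u_def v_def
      by (rule nth_equalityI) (auto simp: nth_append algebra_simps)
    moreover have "u \<in> blocks X m" unfolding u_def blocks_def using x by blast
    moreover have "v \<in> blocks X n" unfolding v_def blocks_def using x by blast
    ultimately show "w \<in> (\<lambda>(u,v). u @ v) ` (blocks X m \<times> blocks X n)" by auto
  qed
  hence "card (blocks X (m + n)) \<le> card ((\<lambda>(u,v). u @ v) ` (blocks X m \<times> blocks X n))"
    by (intro card_mono finite_imageI finite_cartesian_product blocks_finite_gen)
  also have "\<dots> \<le> card (blocks X m \<times> blocks X n)" by (intro card_image_le finite_cartesian_product blocks_finite_gen)
  finally show ?thesis by (simp add: card_cartesian_product)
qed

definition PS :: "nat set \<Rightarrow> real \<Rightarrow> real" where
  "PS S y = (\<Sum>n. if n \<in> S then y ^ Suc n else 0)"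

lemma PS_summable:
  fixes y :: real
  assumes "0 \<le> y" "y < 1"
  shows "summable (\<lambda>n. if n \<in> S then y ^ Suc n else 0)"
proof (rule summable_comparison_test'[of "\<lambda>n. y ^ Suc n"])
  show "summable (\<lambda>n. y ^ Suc n)" using assms by (simp add: summable_geometric)
  show "norm (if n \<in> S then y ^ Suc n else 0) \<le> y ^ Suc n" for n using assms by auto
qed

lemma PS_nonneg: "0 \<le> y \<Longrightarrow> y < 1 \<Longrightarrow> 0 \<le> PS S y"
  unfolding PS_def by (intro suminf_nonneg PS_summable) auto

lemma PS_partial:
  assumes "0 \<le> y" "y < 1"
  shows "(\<Sum>s\<in>{s. s \<in> S \<and> s < m}. y ^ Suc s) \<le> PS S y"
proof -
  have e: "{s. s \<in> S \<and> s < m} = {s\<in>{..<m}. s \<in> S}" by auto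
  have "(\<Sum>s\<in>{s. s \<in> S \<and> s < m}. y ^ Suc s) = (\<Sum>s<m. if s \<in> S then y ^ Suc s else 0)"
    unfolding e by (rule sum.inter_filter) simp
  also have "\<dots> \<le> PS S y" unfolding PS_def
    by (rule sum_le_suminf[OF PS_summable[OF assms]]) (use assms in auto)
  finally show ?thesis .
qed

definition Wt :: "nat set \<Rightarrow> nat \<Rightarrow> bool list set" where
  "Wt S n = {w. length w = n \<and> okw S w \<and> (0 < n \<longrightarrow> w ! 0)}"

lemma Wt_finite: "finite (Wt S n)"
  by (rule finite_subset[OF _ finite_lists_length_eq[of UNIV n]]) (auto simp: Wt_def)

lemma take_Least_false:
  fixes s m :: nat
  assumes "s = (LEAST i. i < m \<and> P i)"
  shows "\<forall>i<s. \<not> (i < m \<and> P i)"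
proof (intro allI impI)
  fix i assume "i < s"
  thus "\<not> (i < m \<and> P i)" using not_less_Least[of i "\<lambda>i. i < m \<and> P i"] assms by simp
qed

lemma Wt_decomp:
  "Wt S (Suc m) \<subseteq> insert (True # replicate m False)
     (\<Union>s\<in>{s. s \<in> S \<and> s < m}. (\<lambda>u. True # replicate s False @ u) ` Wt S (m - s))"
proof
  fix w assume w: "w \<in> Wt S (Suc m)"
  then obtain w' where w': "w = True # w'" "length w' = m" and ok: "okw S w"
    unfolding Wt_def by (cases w) auto
  show "w \<in> insert (True # replicate m False)
     (\<Union>s\<in>{s. s \<in> S \<and> s < m}. (\<lambda>u. True # replicate s False @ u) ` Wt S (m - s))"
  proof (cases "\<exists>i<m. w' ! i")
    case False
    hence "w' = replicate m False" using w' by (intro nth_equalityI) auto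
    thus ?thesis using w' by simp
  next
    case True
    define s where "s = (LEAST i. i < m \<and> w' ! i)"
    have s: "s < m" "w' ! s" using LeastI_ex[OF True[unfolded Bex_def[symmetric]]] 
      unfolding s_def by auto
    have before: "\<not> w' ! i" if "i < s" for i using take_Least_false[OF s_def] that s by auto
    have tk: "take s w' = replicate s False"
      by (rule nth_equalityI) (use w' s before in auto)
    have sS: "s \<in> S"
    proof -
      have "Suc s - 0 - 1 \<in> S"
      proof (rule ok[unfolded okw_def, rule_format])
        show "0 < Suc s \<and> Suc s < length w \<and> w ! 0 \<and> w ! Suc s \<and> (\<forall>k. 0 < k \<and> k < Suc s \<longrightarrow> \<not> w ! k)"
        proof (intro conjI allI impI)
          fix k assume "0 < k \<and> k < Suc s"
          thus "\<not> w ! k" using before w' by (cases k) auto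
        qed (use w' s in auto)
      qed
      thus ?thesis by simp
    qed
    have "drop s w' \<in> Wt S (m - s)"
      unfolding Wt_def
    proof (intro CollectI conjI impI)
      show "length (drop s w') = m - s" using w' by simp
      have "drop s w' = drop (Suc s) w" using w' by simp
      thus "okw S (drop s w')" using okw_drop[OF ok] by simp
      show "drop s w' ! 0" using s w' by simp
    qed
    moreover have "w = True # (take s w' @ drop s w')" using w'(1) by simp
    hence "w = (\<lambda>u. True # replicate s False @ u) (drop s w')"
      by (simp only: tk)
    ultimately show ?thesis using sS s by (intro insertI2 UN_I[of s]) auto
  qed
qed

lemma card_UN_insert_le:
  assumes "finite I" "\<And>i. i \<in> I \<Longrightarrow> finite (A i)"
  shows "real (card (insert a (\<Union>i\<in>I. A i))) \<le> 1 + (\<Sum>i\<in>I. real (card (A i)))"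
proof -
  have "card (insert a (\<Union>i\<in>I. A i)) \<le> Suc (card (\<Union>i\<in>I. A i))"
    by (rule card_insert_le_m1) auto
  moreover have "card (\<Union>i\<in>I. A i) \<le> (\<Sum>i\<in>I. card (A i))" using assms(1) by (rule card_UN_le)
  ultimately have "card (insert a (\<Union>i\<in>I. A i)) \<le> 1 + (\<Sum>i\<in>I. card (A i))" by simp
  hence "real (card (insert a (\<Union>i\<in>I. A i))) \<le> real (1 + (\<Sum>i\<in>I. card (A i)))" by linarith
  thus ?thesis by simp
qed

lemma pow_split:
  fixes y :: real
  assumes "y > 0" "s \<le> m"
  shows "(1/y)^(m - s) = (1/y)^(m+1) * y^(Suc s)"
proof -
  have "(1/y)^(m+1) = (1/y)^(m-s) * (1/y)^(Suc s)"
    using assms by (simp add: power_add[symmetric])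
  moreover have "(1/y)^(Suc s) * y^(Suc s) = 1" using assms by (simp add: power_mult_distrib[symmetric])
  ultimately show ?thesis by (metis mult.assoc mult.right_neutral)
qed

lemma Wt_card:
  fixes y :: real
  assumes y: "0 < y" "y < 1" and P: "PS S y \<le> 1"
  shows "real (card (Wt S n)) \<le> real (n+1) * (1/y)^n"
proof (induction n rule: less_induct)
  case (less n)
  have b1: "1 \<le> 1/y" using y by simp
  show ?case
  proof (cases n)
    case 0
    have "Wt S 0 \<subseteq> {[]}" unfolding Wt_def by auto
    hence "card (Wt S 0) \<le> card {[]::bool list}" by (intro card_mono) auto
    hence "card (Wt S 0) \<le> 1" by simp
    thus ?thesis using 0 by simp
  next
    case (Suc m)
    let ?I = "{s. s \<in> S \<and> s < m}"
    let ?A = "\<lambda>s. (\<lambda>u. True # replicate s False @ u) ` Wt S (m - s)"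
    have finI: "finite ?I" by simp
    have "card (Wt S n) \<le> card (insert (True # replicate m False) (\<Union>s\<in>?I. ?A s))"
      unfolding Suc by (intro card_mono Wt_decomp) (auto intro: Wt_finite)
    hence "real (card (Wt S n)) \<le> real (card (insert (True # replicate m False) (\<Union>s\<in>?I. ?A s)))"
      by simp
    also have "\<dots> \<le> 1 + (\<Sum>s\<in>?I. real (card (?A s)))"
      by (rule card_UN_insert_le) (auto intro: Wt_finite)
    also have "\<dots> \<le> 1 + (\<Sum>s\<in>?I. real (m + 1) * (1/y)^(m+1) * y^(Suc s))"
    proof (intro add_left_mono sum_mono)
      fix s assume s: "s \<in> ?I"
      have "real (card (?A s)) \<le> real (card (Wt S (m - s)))" by (simp add: card_image_le Wt_finite)
      also have "\<dots> \<le> real (m - s + 1) * (1/y)^(m - s)" using less.IH[of "m - s"] Suc by simp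
      also have "\<dots> \<le> real (m + 1) * (1/y)^(m - s)" using y by (intro mult_right_mono) auto
      also have "\<dots> = real (m + 1) * (1/y)^(m+1) * y^(Suc s)"
        using pow_split[OF y(1), of s m] s by simp
      finally show "real (card (?A s)) \<le> real (m + 1) * (1/y)^(m+1) * y^(Suc s)" .
    qed
    also have "\<dots> = 1 + real (m + 1) * (1/y)^(m+1) * (\<Sum>s\<in>?I. y^(Suc s))"
      by (simp add: sum_distrib_left)
    also have "\<dots> \<le> 1 + real (m + 1) * (1/y)^(m+1) * 1"
      using PS_partial[of y S m] y P by (intro add_left_mono mult_left_mono) auto
    also have "\<dots> \<le> (1/y)^(m+1) + real (m + 1) * (1/y)^(m+1)"
      using one_le_power[OF b1, of "m+1"] by simp
    also have "\<dots> = real (n + 1) * (1/y)^n" using Suc by (simp add: algebra_simps add_divide_distrib[symmetric])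
    finally show ?thesis .
  qed
qed

lemma Wall_decomp:
  "{w. length w = n \<and> okw S w} \<subseteq> insert (replicate n False)
     (\<Union>a\<in>{..<n}. (\<lambda>u. replicate a False @ u) ` Wt S (n - a))"
proof
  fix w assume w: "w \<in> {w. length w = n \<and> okw S w}"
  show "w \<in> insert (replicate n False) (\<Union>a\<in>{..<n}. (\<lambda>u. replicate a False @ u) ` Wt S (n - a))"
  proof (cases "\<exists>i<n. w ! i")
    case False
    hence "w = replicate n False" using w by (intro nth_equalityI) auto
    thus ?thesis by simp
  next
    case True
    define a where "a = (LEAST i. i < n \<and> w ! i)"
    have a: "a < n" "w ! a" using LeastI_ex[OF True[unfolded Bex_def[symmetric]]]
      unfolding a_def by auto
    have before: "\<not> w ! i" if "i < a" for i using take_Least_false[OF a_def] that a by auto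
    have tk: "take a w = replicate a False"
      by (rule nth_equalityI) (use w a before in auto)
    have "drop a w \<in> Wt S (n - a)"
      unfolding Wt_def using w a okw_drop[of S w a] by auto
    moreover have "w = take a w @ drop a w" by simp
    hence "w = (\<lambda>u. replicate a False @ u) (drop a w)" by (simp only: tk)
    ultimately show ?thesis using a by (intro insertI2 UN_I[of a]) auto
  qed
qed

lemma Wall_card:
  fixes y :: real
  assumes y: "0 < y" "y < 1" and P: "PS S y \<le> 1"
  shows "real (card {w. length w = n \<and> okw S w}) \<le> real ((n+1)^2) * (1/y)^n"
proof -
  have b1: "1 \<le> 1/y" using y by simp
  let ?A = "\<lambda>a. (\<lambda>u. replicate a False @ u) ` Wt S (n - a)"
  have "card {w. length w = n \<and> okw S w} \<le> card (insert (replicate n False) (\<Union>a\<in>{..<n}. ?A a))"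
    by (intro card_mono Wall_decomp) (auto intro: Wt_finite)
  hence "real (card {w. length w = n \<and> okw S w}) \<le> real (card (insert (replicate n False) (\<Union>a\<in>{..<n}. ?A a)))"
    by simp
  also have "\<dots> \<le> 1 + (\<Sum>a<n. real (card (?A a)))"
    by (rule card_UN_insert_le) (auto intro: Wt_finite)
  also have "\<dots> \<le> 1 + (\<Sum>a<n. real (n + 1) * (1/y)^n)"
  proof (intro add_left_mono sum_mono)
    fix a assume a: "a \<in> {..<n}"
    have "real (card (?A a)) \<le> real (card (Wt S (n - a)))" by (simp add: card_image_le Wt_finite)
    also have "\<dots> \<le> real (n - a + 1) * (1/y)^(n - a)" by (rule Wt_card[OF y P])
    also have "\<dots> \<le> real (n + 1) * (1/y)^n"
      using y by (intro mult_mono power_increasing b1) auto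
    finally show "real (card (?A a)) \<le> real (n + 1) * (1/y)^n" .
  qed
  also have "\<dots> = 1 + real n * real (n+1) * (1/y)^n" by simp
  also have "\<dots> \<le> real ((n+1)^2) * (1/y)^n"
  proof -
    have "1 \<le> (1/y)^n" using one_le_power[OF b1] by simp
    hence "1 + real n * real (n+1) * (1/y)^n \<le> (1/y)^n + real n * real (n+1) * (1/y)^n" by simp
    also have "\<dots> \<le> real ((n+1)^2) * (1/y)^n"
      using y by (simp add: power2_eq_square algebra_simps)
    finally show ?thesis .
  qed
  finally show ?thesis .
qed

lemma blocks_card_upper:
  fixes y :: real
  assumes y: "0 < y" "y < 1" and P: "PS S y \<le> 1"
  shows "real (card (blocks (gap_shift S) n)) \<le> real ((n+1)^2) * (1/y)^n"
proof -
  have "card (blocks (gap_shift S) n) \<le> card {w. length w = n \<and> okw S w}"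
  proof (rule card_mono)
    show "finite {w. length w = n \<and> okw S w}"
      by (rule finite_subset[OF _ finite_lists_length_eq[of UNIV n]]) auto
    show "blocks (gap_shift S) n \<subseteq> {w. length w = n \<and> okw S w}" using blocks_okw by blast
  qed
  thus ?thesis using Wall_card[OF y P, of n] by linarith
qed

definition Ew :: "nat set \<Rightarrow> nat \<Rightarrow> bool list set" where
  "Ew S n = {w. length w = n \<and> (0 < n \<longrightarrow> w ! 0) \<and> okw S (w @ [True])}"

lemma Ew_finite: "finite (Ew S n)"
  by (rule finite_subset[OF _ finite_lists_length_eq[of UNIV n]]) (auto simp: Ew_def)

lemma Ew_blocks: "Ew S n \<subseteq> blocks (gap_shift S) n"
proof
  fix w assume w: "w \<in> Ew S n"
  let ?v = "w @ [True]"
  let ?x = "\<lambda>k::int. 0 \<le> k \<and> k < int (length ?v) \<and> ?v ! nat k"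
  have x: "?x \<in> gap_shift S" using w unfolding Ew_def by (intro emb_gap) auto
  have "w = map (\<lambda>k. ?x (0 + int k)) [0..<n]"
    by (rule nth_equalityI) (use w in \<open>auto simp: Ew_def nth_append\<close>)
  thus "w \<in> blocks (gap_shift S) n" unfolding blocks_def using x
    by (intro CollectI bexI[of _ ?x] exI[of _ 0])
qed

lemma Ew0: "card (Ew S 0) = 1"
proof -
  have "Ew S 0 = {[]}" unfolding Ew_def okw_def by auto
  thus ?thesis by simp
qed

lemma blk_disj:
  assumes eq: "True # replicate i False @ u = True # replicate j False @ v"
    and u: "u = [] \<or> u ! 0" and ij: "i < j"
  shows False
proof -
  have len: "i + length u = j + length v" using arg_cong[OF eq, of length] by simp
  hence "u \<noteq> []" using ij by auto
  hence u0: "u ! 0" using u by auto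
  have "(replicate i False @ u) ! i = (replicate j False @ v) ! i" using eq by simp
  moreover have "(replicate i False @ u) ! i = u ! 0" by (simp add: nth_append)
  moreover have "(replicate j False @ v) ! i = False" using ij by (simp add: nth_append)
  ultimately show False using u0 by simp
qed

lemma Ew_rec:
  "(\<Sum>i\<in>{i. i \<in> S \<and> i \<le> k}. card (Ew S (k - i))) \<le> card (Ew S (Suc k))"
proof -
  let ?I = "{i. i \<in> S \<and> i \<le> k}"
  let ?A = "\<lambda>i. (\<lambda>u. True # replicate i False @ u) ` Ew S (k - i)"
  have finI: "finite ?I" by simp
  have sub: "(\<Union>i\<in>?I. ?A i) \<subseteq> Ew S (Suc k)"
  proof (intro UN_least subsetI)
    fix i w assume i: "i \<in> ?I" and w: "w \<in> ?A i"
    then obtain u where u: "u \<in> Ew S (k - i)" and wu: "w = True # replicate i False @ u" by auto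
    have v: "u @ [True] \<noteq> []" "(u @ [True]) ! 0"
      using u unfolding Ew_def by (auto simp: nth_append)
    have ok: "okw S (True # replicate i False @ (u @ [True]))"
      by (rule okw_cons) (use u v i in \<open>auto simp: Ew_def\<close>)
    show "w \<in> Ew S (Suc k)" unfolding Ew_def using u i ok wu by (auto simp: Ew_def)
  qed
  have disj: "\<forall>i\<in>?I. \<forall>j\<in>?I. i \<noteq> j \<longrightarrow> ?A i \<inter> ?A j = {}"
  proof (intro ballI impI)
    fix i j assume i: "i \<in> ?I" and j: "j \<in> ?I" and ij: "i \<noteq> j"
    show "?A i \<inter> ?A j = {}"
    proof (rule ccontr)
      assume "?A i \<inter> ?A j \<noteq> {}"
      then obtain u v where u: "u \<in> Ew S (k - i)" and v: "v \<in> Ew S (k - j)"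
        and eq: "True # replicate i False @ u = True # replicate j False @ v" by auto
      have u0: "u = [] \<or> u ! 0" and v0: "v = [] \<or> v ! 0" using u v unfolding Ew_def by auto
      show False
      proof (cases "i < j")
        case True thus False using blk_disj[OF eq u0] by simp
      next
        case False hence "j < i" using ij by simp
        thus False using blk_disj[OF eq[symmetric] v0] by simp
      qed
    qed
  qed
  have "card (\<Union>i\<in>?I. ?A i) = (\<Sum>i\<in>?I. card (?A i))"
    by (rule card_UN_disjoint[OF finI _ disj]) (auto intro: Ew_finite)
  also have "\<dots> = (\<Sum>i\<in>?I. card (Ew S (k - i)))"
    by (intro sum.cong refl card_image) (auto intro: inj_onI)
  finally have "(\<Sum>i\<in>?I. card (Ew S (k - i))) = card (\<Union>i\<in>?I. ?A i)" by simp
  also have "\<dots> \<le> card (Ew S (Suc k))" by (intro card_mono sub Ew_finite)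
  finally show ?thesis .
qed

definition ab :: "nat set \<Rightarrow> nat \<Rightarrow> real" where
  "ab S n = log 2 (real (card (blocks (gap_shift S) n)))"

lemma ab_nonneg: "ab S n \<ge> 0"
  unfolding ab_def using blocks_card_pos[of S n] by simp

lemma ab_sub: "ab S (m + n) \<le> ab S m + ab S n"
proof -
  have p: "real (card (blocks (gap_shift S) k)) > 0" for k using blocks_card_pos[of S k] by simp
  have "real (card (blocks (gap_shift S) (m+n))) \<le> real (card (blocks (gap_shift S) m)) * real (card (blocks (gap_shift S) n))"
    using blocks_submult[of "gap_shift S" m n] by (metis of_nat_le_iff of_nat_mult)
  hence "ab S (m+n) \<le> log 2 (real (card (blocks (gap_shift S) m)) * real (card (blocks (gap_shift S) n)))"
    unfolding ab_def using p by (subst log_le_cancel_iff) (auto intro: mult_pos_pos)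
  also have "\<dots> = ab S m + ab S n" unfolding ab_def using p by (simp add: log_mult_pos)
  finally show ?thesis .
qed

definition Lent :: "nat set \<Rightarrow> real" where
  "Lent S = Inf ((\<lambda>n. ab S n / real n) ` {1..})"

lemma ab_lim: "(\<lambda>n. ab S n / real n) \<longlonglongrightarrow> Lent S"
  unfolding Lent_def by (rule fekete[OF ab_sub ab_nonneg])

lemma entropy_Lent: "entropy (gap_shift S) = Lent S"
proof -
  have "(\<lambda>n. log 2 (real (card (blocks (gap_shift S) n))) / real n) \<longlonglongrightarrow> Lent S"
    using ab_lim[of S] unfolding ab_def .
  thus ?thesis unfolding entropy_def by (rule limI)
qed

lemma entropy_upper:
  assumes r: "0 < r" and P: "PS S (2 powr - r) \<le> 1"
  shows "entropy (gap_shift S) \<le> r"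
proof -
  define y where "y = 2 powr - r"
  have y: "0 < y" "y < 1" unfolding y_def using r powr_less_mono[of "-r" 0 2] by auto
  have iy: "(1/y)^n = 2 powr (real n * r)" for n
    unfolding y_def by (simp add: powr_minus_divide powr_power[symmetric] divide_inverse powr_minus)
  have bound: "ab S n / real n \<le> r + 2 * log 2 (real n + 1) / real n" if n: "n \<ge> 1" for n
  proof -
    have c: "real (card (blocks (gap_shift S) n)) \<le> real ((n+1)^2) * (1/y)^n"
      by (rule blocks_card_upper[OF y P[folded y_def]])
    have "ab S n \<le> log 2 (real ((n+1)^2) * (1/y)^n)"
      unfolding ab_def using blocks_card_pos[of S n] y c by (subst log_le_cancel_iff) auto
    also have "\<dots> = 2 * log 2 (real n + 1) + real n * r"
      using y by (simp add: log_mult_pos iy log_nat_power add.commute)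
    finally have "ab S n \<le> 2 * log 2 (real n + 1) + real n * r" .
    thus ?thesis using n by (simp add: field_simps)
  qed
  have lim: "(\<lambda>n. r + 2 * log 2 (real n + 1) / real n) \<longlonglongrightarrow> r"
    by real_asymp
  have "Lent S \<le> r"
    by (rule LIMSEQ_le[OF ab_lim lim]) (use bound in \<open>auto intro: exI[of _ 1]\<close>)
  thus ?thesis by (simp add: entropy_Lent)
qed

lemma Lent_bdd: "bdd_below ((\<lambda>n. ab S n / real n) ` {1..})"
  by (rule bdd_belowI[of _ 0]) (use ab_nonneg in auto)

lemma entropy_lower:
  assumes r: "0 < r" and P: "1 \<le> PS S (2 powr - r)"
  shows "r \<le> entropy (gap_shift S)"
proof (rule ccontr)
  assume "\<not> r \<le> entropy (gap_shift S)"
  hence h: "Lent S < r" by (simp add: entropy_Lent)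
  define q' where "q' = (Lent S + r) / 2"
  have q': "Lent S < q'" "q' < r" using h unfolding q'_def by auto
  obtain n0 where n0: "n0 \<ge> 1" "ab S n0 / real n0 < q'"
    using q'(1) unfolding Lent_def by (subst (asm) cInf_less_iff[OF _ Lent_bdd]) auto
  obtain C where C: "\<And>n. ab S n \<le> real n * (ab S n0 / real n0) + C"
    using subadd_bound[of "ab S", OF ab_sub ab_nonneg, of n0] n0 by auto
  define y where "y = 2 powr - r"
  have y: "0 < y" "y < 1" unfolding y_def using r powr_less_mono[of "-r" 0 2] by auto
  define \<rho> where "\<rho> = 2 powr (q' - r)"
  have \<rho>: "0 < \<rho>" "\<rho> < 1" unfolding \<rho>_def using q' powr_less_mono[of "q' - r" 0 2] by auto
  define e where "e = (\<lambda>n. real (card (Ew S n)))"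
  define b where "b = (\<lambda>n. e n * y ^ n)"
  define a where "a = (\<lambda>i. if i \<in> S then y ^ Suc i else (0::real))"
  have e_nn: "e n \<ge> 0" for n unfolding e_def by simp
  have b_nn: "b n \<ge> 0" for n unfolding b_def using e_nn y by simp
  have a_nn: "a n \<ge> 0" for n unfolding a_def using y by simp
  have e_bound: "e n \<le> 2 powr (real n * q' + C)" for n
  proof -
    have "e n \<le> real (card (blocks (gap_shift S) n))"
      unfolding e_def using Ew_blocks[of S n] blocks_finite[of S n] by (simp add: card_mono)
    also have "\<dots> = 2 powr ab S n" unfolding ab_def using blocks_card_pos[of S n] by simp
    also have "\<dots> \<le> 2 powr (real n * q' + C)"
    proof -
      have "real n * (ab S n0 / real n0) \<le> real n * q'" using n0 by (intro mult_left_mono) auto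
      hence "ab S n \<le> real n * q' + C" using C[of n] by linarith
      thus ?thesis by simp
    qed
    finally show ?thesis .
  qed
  have b_bound: "b n \<le> 2 powr C * \<rho> ^ n" for n
  proof -
    have yn: "y ^ n = 2 powr (- r * real n)" unfolding y_def by (simp add: powr_power mult.commute)
    have rn: "\<rho> ^ n = 2 powr ((q' - r) * real n)" unfolding \<rho>_def by (simp add: powr_power mult.commute)
    have "b n \<le> 2 powr (real n * q' + C) * y ^ n" unfolding b_def using e_bound[of n] y
      by (intro mult_right_mono) auto
    also have "\<dots> = 2 powr C * \<rho> ^ n" unfolding yn rn by (simp add: powr_add[symmetric] algebra_simps)
    finally show ?thesis .
  qed
  have sb: "summable b"
    by (rule summable_comparison_test'[of "\<lambda>n. 2 powr C * \<rho> ^ n"])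
       (use \<rho> b_nn b_bound in \<open>auto intro: summable_mult summable_geometric\<close>)
  have sa: "summable a" unfolding a_def using PS_summable[of y S] y by simp
  have cp: "(\<lambda>k. \<Sum>i\<le>k. a i * b (k - i)) sums (suminf a * suminf b)"
    by (rule Cauchy_product_sums) (use sa sb a_nn b_nn in auto)
  have tm: "(\<Sum>i\<le>k. a i * b (k - i)) \<le> b (Suc k)" for k
  proof -
    have "(\<Sum>i\<le>k. a i * b (k - i)) = (\<Sum>i\<le>k. if i \<in> S then y ^ Suc k * e (k - i) else 0)"
    proof (rule sum.cong[OF refl])
      fix i assume i: "i \<in> {..k}"
      have "y ^ Suc i * y ^ (k - i) = y ^ Suc k" using i by (simp add: power_add[symmetric])
      hence "y ^ Suc i * (e (k - i) * y ^ (k - i)) = y ^ Suc k * e (k - i)"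
        by (metis mult.assoc mult.commute)
      thus "a i * b (k - i) = (if i \<in> S then y ^ Suc k * e (k - i) else 0)"
        unfolding a_def b_def by simp
    qed
    also have "\<dots> = (\<Sum>i\<in>{i\<in>{..k}. i \<in> S}. y ^ Suc k * e (k - i))"
      by (rule sum.inter_filter[symmetric]) simp
    also have "\<dots> = y ^ Suc k * (\<Sum>i\<in>{i. i \<in> S \<and> i \<le> k}. e (k - i))"
      by (simp add: sum_distrib_left conj_commute)
    also have "\<dots> \<le> y ^ Suc k * e (Suc k)"
    proof (rule mult_left_mono)
      have "(\<Sum>i\<in>{i. i \<in> S \<and> i \<le> k}. card (Ew S (k - i))) \<le> card (Ew S (Suc k))" by (rule Ew_rec)
      hence "real (\<Sum>i\<in>{i. i \<in> S \<and> i \<le> k}. card (Ew S (k - i))) \<le> real (card (Ew S (Suc k)))"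
        by linarith
      thus "(\<Sum>i\<in>{i. i \<in> S \<and> i \<le> k}. e (k - i)) \<le> e (Suc k)" unfolding e_def by simp
    qed (use y in simp)
    also have "\<dots> = b (Suc k)" unfolding b_def by simp
    finally show ?thesis .
  qed
  have "suminf a * suminf b \<le> (\<Sum>k. b (Suc k))"
    using cp tm sb by (intro sums_le[OF tm cp]) (simp add: summable_Suc_iff summable_sums)
  also have "\<dots> = suminf b - b 0" by (rule suminf_split_head[OF sb])
  also have "b 0 = 1" unfolding b_def e_def by (simp add: Ew0)
  finally have "suminf a * suminf b \<le> suminf b - 1" .
  moreover have "suminf b \<le> suminf a * suminf b"
  proof -
    have "suminf a = PS S y" unfolding a_def PS_def ..
    hence "1 \<le> suminf a" using P y_def by simp
    moreover have "0 \<le> suminf b" using sb b_nn by (simp add: suminf_nonneg)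
    ultimately show ?thesis by (metis mult_le_cancel_right1 not_le order_less_le_trans)
  qed
  ultimately show False by linarith
qed

lemma geo_suc:
  fixes v :: real
  assumes "0 \<le> v" "v < 1"
  shows "summable (\<lambda>n. v ^ Suc n)" "(\<Sum>n. v ^ Suc n) = v / (1 - v)"
proof -
  have s: "summable (\<lambda>n. v ^ n)" using assms by (simp add: summable_geometric)
  show "summable (\<lambda>n. v ^ Suc n)" using summable_mult[OF s, of v] by simp
  have "(\<Sum>n. v ^ Suc n) = v * (\<Sum>n. v ^ n)" using suminf_mult[OF s, of v] by simp
  also have "\<dots> = v / (1 - v)" using assms by (simp add: suminf_geometric)
  finally show "(\<Sum>n. v ^ Suc n) = v / (1 - v)" .
qed

lemma frac_diff:
  fixes u v :: real
  assumes "u < 1" "v < 1"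
  shows "v / (1 - v) - u / (1 - u) = (v - u) / ((1 - v) * (1 - u))"
  using assms by (simp add: field_simps)

lemma PS_lip:
  fixes u v :: real
  assumes "0 \<le> u" "u \<le> v" "v < 1"
  shows "0 \<le> PS S v - PS S u" "PS S v - PS S u \<le> v / (1 - v) - u / (1 - u)"
proof -
  have u1: "u < 1" using assms by simp
  let ?f = "\<lambda>x n. if n \<in> S then x ^ Suc n else (0::real)"
  have sv: "summable (?f v)" and su: "summable (?f u)" using PS_summable assms u1 by auto
  have d: "PS S v - PS S u = (\<Sum>n. ?f v n - ?f u n)" unfolding PS_def by (rule suminf_diff[OF sv su])
  have tm: "0 \<le> ?f v n - ?f u n" "?f v n - ?f u n \<le> v ^ Suc n - u ^ Suc n" for n
    using assms power_mono[of u v "Suc n"] by auto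
  have sd: "summable (\<lambda>n. ?f v n - ?f u n)" using summable_diff[OF sv su] .
  show "0 \<le> PS S v - PS S u" unfolding d using tm(1) sd by (simp add: suminf_nonneg)
  have "(\<Sum>n. ?f v n - ?f u n) \<le> (\<Sum>n. v ^ Suc n - u ^ Suc n)"
    by (rule suminf_le[OF tm(2) sd]) (intro summable_diff geo_suc; use assms u1 in auto)
  also have "\<dots> = v / (1 - v) - u / (1 - u)"
    using suminf_diff[OF geo_suc(1) geo_suc(1), of v u] geo_suc(2)[of v] geo_suc(2)[of u] assms u1 by auto
  finally show "PS S v - PS S u \<le> v / (1 - v) - u / (1 - u)" unfolding d .
qed

lemma entropy_iff:
  assumes q: "0 < q" "q < 1"
  shows "entropy (gap_shift S) = q \<longleftrightarrow> PS S (2 powr - q) = 1"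
proof
  assume "PS S (2 powr - q) = 1"
  thus "entropy (gap_shift S) = q"
    using entropy_upper[of q S] entropy_lower[of q S] q by auto
next
  assume E: "entropy (gap_shift S) = q"
  define y where "y = 2 powr - q"
  have y: "0 < y" "y < 1" unfolding y_def using q powr_less_mono[of "-q" 0 2] by auto
  have ly: "log 2 y = - q" unfolding y_def by simp
  show "PS S (2 powr - q) = 1"
  proof (rule ccontr)
    assume ne: "PS S (2 powr - q) \<noteq> 1"
    show False
    proof (cases "PS S y < 1")
      case True
      define d where "d = 1 - PS S y"
      have d: "d > 0" unfolding d_def using True by simp
      define \<delta> where "\<delta> = min ((1 - y) / 2) (d * (1 - y)^2 / 4)"
      have \<delta>: "\<delta> > 0" "\<delta> \<le> (1 - y) / 2" "\<delta> \<le> d * (1 - y)^2 / 4"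
        unfolding \<delta>_def using d y by (simp_all only: min.cobounded1 min.cobounded2, simp)
      define v where "v = y + \<delta>"
      have v: "y < v" "v < 1" "(1 - y) / 2 \<le> 1 - v" unfolding v_def using \<delta> y by auto
      have "v / (1 - v) - y / (1 - y) = \<delta> / ((1 - v) * (1 - y))"
        using frac_diff[of y v] y v unfolding v_def by simp
      also have "\<dots> \<le> \<delta> / ((1 - y) / 2 * (1 - y))"
        using \<delta> y v by (intro divide_left_mono mult_right_mono) auto
      also have "\<dots> = 2 * \<delta> / (1 - y)^2" by (simp add: power2_eq_square)
      also have "\<dots> \<le> d / 2" using \<delta>(3) y by (simp add: field_simps)
      finally have "PS S v < 1" using PS_lip(2)[of y v S] y v d_def d by linarith
      define r where "r = - log 2 v"
      have vr: "2 powr - r = v" unfolding r_def using v y by simp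
      have r0: "0 < r" unfolding r_def using v y by simp
      have "r < q"
      proof -
        have "log 2 y < log 2 v" using v y by simp
        thus ?thesis using ly r_def by simp
      qed
      moreover have "entropy (gap_shift S) \<le> r"
        by (rule entropy_upper[OF r0]) (use vr \<open>PS S v < 1\<close> in simp)
      ultimately show False using E by simp
    next
      case False
      hence gt: "PS S y > 1" using ne y_def by simp
      define d where "d = PS S y - 1"
      have d: "d > 0" unfolding d_def using gt by simp
      define \<delta> where "\<delta> = min (y / 2) (d * (1 - y)^2 / 2)"
      have \<delta>: "\<delta> > 0" "\<delta> \<le> y / 2" "\<delta> \<le> d * (1 - y)^2 / 2"
        unfolding \<delta>_def using d y by (simp_all only: min.cobounded1 min.cobounded2, simp)
      define u where "u = y - \<delta>"
      have u: "u < y" "0 < u" "1 - y \<le> 1 - u" unfolding u_def using \<delta> y by auto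
      have "y / (1 - y) - u / (1 - u) = \<delta> / ((1 - y) * (1 - u))"
        using frac_diff[of u y] y u unfolding u_def by simp
      also have "\<dots> \<le> \<delta> / ((1 - y) * (1 - y))"
        using \<delta> y u by (intro divide_left_mono mult_left_mono) auto
      also have "\<dots> \<le> (d * (1 - y)^2 / 2) / ((1 - y) * (1 - y))"
        using \<delta>(3) y by (intro divide_right_mono) auto
      also have "\<dots> = d / 2" using y by (simp add: power2_eq_square)
      finally have "PS S u > 1" using PS_lip(2)[of u y S] y u d_def d by linarith
      define r where "r = - log 2 u"
      have vr: "2 powr - r = u" unfolding r_def using u by simp
      have "q < r"
      proof -
        have "log 2 u < log 2 y" using u y by simp
        thus ?thesis using ly r_def by simp
      qed
      moreover have "r \<le> entropy (gap_shift S)"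
        by (rule entropy_lower) (use vr \<open>PS S u > 1\<close> \<open>q < r\<close> q in auto)
      ultimately show False using E by simp
    qed
  qed
qed

definition pos :: "nat \<Rightarrow> nat \<Rightarrow> nat" where
  "pos k b = k + 8 + (b div k) * (k + 2) + b mod k"

definition code :: "nat \<Rightarrow> (nat \<Rightarrow> bool) \<Rightarrow> nat set" where
  "code k w = {n. n < k + 5} \<union> {k + 7 + i * (k + 2) | i. True} \<union> {pos k b | b. w b}"

lemma per_exists:
  fixes n b p :: nat
  assumes "0 < p" "b \<le> n + p"
  shows "\<exists>i. n < b + i * p \<and> b + i * p \<le> n + p"
proof (cases "n < b")
  case True thus ?thesis using assms by (intro exI[of _ 0]) auto
next
  case False
  define i where "i = (n - b) div p + 1"
  have e: "((n - b) div p) * p + (n - b) mod p = n - b" by simp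
  have m: "(n - b) mod p < p" using assms by simp
  have "b + i * p = b + ((n - b) div p) * p + p" unfolding i_def by (simp add: algebra_simps)
  thus ?thesis using e m False by (intro exI[of _ i]) linarith
qed

lemma pos_mod:
  assumes k: "k > 0"
  shows "pos k b \<ge> k + 6" "(pos k b - (k + 6)) mod (k + 2) = 2 + b mod k"
proof -
  show "pos k b \<ge> k + 6" unfolding pos_def by simp
  have "pos k b - (k + 6) = (b div k) * (k + 2) + (2 + b mod k)" unfolding pos_def by simp
  moreover have "2 + b mod k < k + 2" using k by simp
  ultimately show "(pos k b - (k + 6)) mod (k + 2) = 2 + b mod k"
    by (metis mod_mult_self3 mod_less)
qed

lemma pos_strict_mono:
  assumes k: "k > 0" and bb: "b < b'"
  shows "pos k b < pos k b'"
proof (cases "b div k = b' div k")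
  case True
  have "b mod k < b' mod k"
  proof -
    have "b = (b div k) * k + b mod k" "b' = (b' div k) * k + b' mod k" by simp_all
    moreover have "(b div k) * k = (b' div k) * k" using True by simp
    ultimately show ?thesis using bb by linarith
  qed
  moreover have "(b div k) * (k + 2) = (b' div k) * (k + 2)" using True by simp
  ultimately show ?thesis unfolding pos_def by linarith
next
  case False
  have "b div k \<le> b' div k" using bb by (simp add: div_le_mono)
  hence lt: "b div k + 1 \<le> b' div k" using False by simp
  have "b mod k < k" using k by simp
  moreover have "(b div k + 1) * (k + 2) = (b div k) * (k + 2) + (k + 2)" by (simp only: distrib_right mult_1)
  ultimately have "(b div k) * (k + 2) + b mod k < (b div k + 1) * (k + 2)" by linarith
  also have "\<dots> \<le> (b' div k) * (k + 2)" using lt by (intro mult_right_mono) auto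
  finally show ?thesis unfolding pos_def by linarith
qed

lemma pos_inj: "k > 0 \<Longrightarrow> pos k b = pos k b' \<Longrightarrow> b = b'"
  by (metis linorder_neqE_nat pos_strict_mono order_less_irrefl)

lemma ones_mod:
  fixes k i :: nat
  shows "(k + 7 + i * (k + 2) - (k + 6)) mod (k + 2) = 1"
proof -
  have "k + 7 + i * (k + 2) - (k + 6) = 1 + i * (k + 2)" by simp
  moreover have "(1 + i * (k + 2)) mod (k + 2) = 1 mod (k + 2)" by (rule mod_mult_self1)
  moreover have "1 mod (k + 2) = (1::nat)" by simp
  ultimately show ?thesis by (simp only:)
qed

lemma zeros_mod:
  fixes k i :: nat
  shows "(k + 6 + i * (k + 2) - (k + 6)) mod (k + 2) = 0"
proof -
  have "k + 6 + i * (k + 2) - (k + 6) = i * (k + 2)" by simp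
  moreover have "(i * (k + 2)) mod (k + 2) = 0" by (rule mod_mult_self2_is_0)
  ultimately show ?thesis by (simp only:)
qed

lemma zero_notin_code:
  assumes k: "k > 0"
  shows "k + 6 + i * (k + 2) \<notin> code k w"
proof
  assume "k + 6 + i * (k + 2) \<in> code k w"
  then consider "k + 6 + i * (k + 2) < k + 5" | j where "k + 6 + i * (k + 2) = k + 7 + j * (k + 2)"
    | b where "k + 6 + i * (k + 2) = pos k b" unfolding code_def by auto
  thus False
  proof cases
    case 1 thus False by simp
  next
    case 2 thus False using zeros_mod[of k i] ones_mod[of k j] by simp
  next
    case 3 thus False using zeros_mod[of k i] pos_mod[OF k, of b] by simp
  qed
qed

lemma km_notin_code:
  assumes k: "k > 0"
  shows "k + 5 \<notin> code k w"
proof -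
  have "k + 5 \<noteq> pos k b" for b using pos_mod(1)[OF k, of b] by simp
  thus ?thesis unfolding code_def by auto
qed

lemma code_Z:
  assumes k: "k > 0"
  shows "\<exists>j \<le> k + 1. n + 1 + j \<in> code k w"
proof (cases "n + 1 < k + 5")
  case True thus ?thesis unfolding code_def by (intro exI[of _ 0]) auto
next
  case False
  obtain i where i: "n < k + 7 + i * (k + 2)" "k + 7 + i * (k + 2) \<le> n + (k + 2)"
    using per_exists[of "k+2" "k+7" n] False k by auto
  have eq: "n + 1 + (k + 7 + i * (k + 2) - (n + 1)) = k + 7 + i * (k + 2)" using i by simp
  show ?thesis
  proof (intro exI conjI)
    show "k + 7 + i * (k + 2) - (n + 1) \<le> k + 1" using i by simp
    show "n + 1 + (k + 7 + i * (k + 2) - (n + 1)) \<in> code k w" unfolding eq code_def by blast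
  qed
qed

lemma code_ge: "n \<notin> code k w \<Longrightarrow> n \<ge> k + 5"
  unfolding code_def by (rule ccontr) auto

lemma code_O:
  assumes k: "k > 0" and n: "n \<notin> code k w"
  shows "\<exists>j \<le> k + 1. n + 1 + j \<notin> code k w"
proof -
  have "n \<ge> k + 5" using code_ge[OF n] .
  then obtain i where i: "n < k + 6 + i * (k + 2)" "k + 6 + i * (k + 2) \<le> n + (k + 2)"
    using per_exists[of "k+2" "k+6" n] by auto
  have eq: "n + 1 + (k + 6 + i * (k + 2) - (n + 1)) = k + 6 + i * (k + 2)" using i by simp
  show ?thesis
  proof (intro exI conjI)
    show "k + 6 + i * (k + 2) - (n + 1) \<le> k + 1" using i by simp
    show "n + 1 + (k + 6 + i * (k + 2) - (n + 1)) \<notin> code k w" unfolding eq by (rule zero_notin_code[OF k])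
  qed
qed

lemma pos_in_code_iff:
  assumes k: "k > 0"
  shows "pos k p \<in> code k w \<longleftrightarrow> w p"
proof
  assume "pos k p \<in> code k w"
  then consider "pos k p < k + 5" | j where "pos k p = k + 7 + j * (k + 2)"
    | b where "pos k p = pos k b" "w b" unfolding code_def by auto
  thus "w p"
  proof cases
    case 1 thus ?thesis using pos_mod(1)[OF k, of p] by simp
  next
    case 2 thus ?thesis using pos_mod(2)[OF k, of p] ones_mod[of k j] by simp
  next
    case 3 thus ?thesis using pos_inj[OF k] by metis
  qed
qed (auto simp: code_def)

lemma code_agree:
  assumes k: "k > 0" and agree: "\<And>b. b < p \<Longrightarrow> w b = w' b" and n: "n < pos k p"
  shows "n \<in> code k w \<longleftrightarrow> n \<in> code k w'"
proof -
  have "(\<exists>b. n = pos k b \<and> w b) \<longleftrightarrow> (\<exists>b. n = pos k b \<and> w' b)"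
  proof -
    have lt: "n = pos k b \<Longrightarrow> b < p" for b
      using n pos_strict_mono[OF k, of p b] by (cases "b < p") (auto simp: not_less le_less)
    show ?thesis using lt agree by metis
  qed
  thus ?thesis unfolding code_def by blast
qed

lemma zero_in_code: "0 \<in> code k w" unfolding code_def by simp

lemma PS_upper_miss:
  fixes x :: real
  assumes x: "0 \<le> x" "x < 1" and j: "j \<notin> T"
  shows "PS T x \<le> x / (1 - x) - x ^ Suc j"
proof -
  let ?g = "\<lambda>i. if i \<in> T then x ^ Suc i else 0"
  let ?h = "\<lambda>i. x ^ Suc i"
  have sg: "summable ?g" using PS_summable[OF x] .
  have sh: "summable ?h" using geo_suc(1)[OF x] .
  have sd: "summable (\<lambda>i. ?h i - ?g i)" by (rule summable_diff[OF sh sg])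
  have "(\<Sum>i\<in>{j}. ?h i - ?g i) \<le> (\<Sum>i. ?h i - ?g i)"
    by (rule sum_le_suminf[OF sd]) (use x in auto)
  also have "\<dots> = (\<Sum>i. ?h i) - PS T x" unfolding PS_def by (rule suminf_diff[OF sh sg, symmetric])
  finally show ?thesis using j geo_suc(2)[OF x] by simp
qed

lemma PS_lower_hit:
  fixes x :: real
  assumes x: "0 \<le> x" "x < 1" and j: "j \<in> T"
  shows "x ^ Suc j \<le> PS T x"
proof -
  let ?g = "\<lambda>i. if i \<in> T then x ^ Suc i else 0"
  have "(\<Sum>i\<in>{j}. ?g i) \<le> (\<Sum>i. ?g i)"
    by (rule sum_le_suminf[OF PS_summable[OF x]]) (use x in auto)
  thus ?thesis using j unfolding PS_def by simp
qed

lemma PS_le_geo: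
  fixes x :: real
  assumes x: "0 \<le> x" "x < 1"
  shows "PS T x \<le> x / (1 - x)"
proof -
  have "PS T x \<le> (\<Sum>i. x ^ Suc i)" unfolding PS_def
    by (rule suminf_le[OF _ PS_summable[OF x] geo_suc(1)[OF x]]) (use x in auto)
  thus ?thesis using geo_suc(2)[OF x] by simp
qed

lemma PS_split:
  fixes x :: real
  assumes x: "0 \<le> x" "x < 1"
  shows "PS S x = (\<Sum>i<Suc n. if i \<in> S then x ^ Suc i else 0) + x ^ Suc n * PS {i. n + 1 + i \<in> S} x"
proof -
  let ?f = "\<lambda>i. if i \<in> S then x ^ Suc i else 0"
  have "PS S x = (\<Sum>i. ?f (i + Suc n)) + (\<Sum>i<Suc n. ?f i)"
    unfolding PS_def by (rule suminf_split_initial_segment[OF PS_summable[OF x]])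
  moreover have "(\<lambda>i. ?f (i + Suc n)) = (\<lambda>i. x ^ Suc n * (if i \<in> {i. n + 1 + i \<in> S} then x ^ Suc i else 0))"
    by (rule ext) (simp add: power_add[symmetric] add.commute add.left_commute)
  moreover have "(\<Sum>i. x ^ Suc n * (if i \<in> {i. n + 1 + i \<in> S} then x ^ Suc i else 0)) = x ^ Suc n * PS {i. n + 1 + i \<in> S} x"
    unfolding PS_def by (rule suminf_mult[OF PS_summable[OF x]])
  ultimately show ?thesis by simp
qed

lemma unique_exp:
  fixes x :: real
  assumes x: "0 < x" "x < 1" and P: "PS S x = 1" and P': "PS S' x = 1"
    and c1: "\<And>n. n \<in> S \<Longrightarrow> x / (1 - x) < 1 + PS {i. n + 1 + i \<in> S} x"
    and c0: "\<And>n. n \<notin> S \<Longrightarrow> PS {i. n + 1 + i \<in> S} x < 1"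
  shows "S' = S"
proof (rule ccontr)
  assume ne: "S' \<noteq> S"
  hence ex: "\<exists>n. (n \<in> S) \<noteq> (n \<in> S')" by auto
  define n where "n = (LEAST n. (n \<in> S) \<noteq> (n \<in> S'))"
  have n: "(n \<in> S) \<noteq> (n \<in> S')" unfolding n_def by (rule LeastI_ex[OF ex])
  have bef: "(i \<in> S) = (i \<in> S')" if "i < n" for i using not_less_Least[OF that[unfolded n_def]] by blast
  have x0: "0 \<le> x" using x by simp
  have pre: "(\<Sum>i<n. if i \<in> S then x ^ Suc i else 0) = (\<Sum>i<n. if i \<in> S' then x ^ Suc i else 0)"
    by (rule sum.cong) (use bef in auto)
  have eq: "(if n \<in> S then x ^ Suc n else 0) + x ^ Suc n * PS {i. n + 1 + i \<in> S} x
      = (if n \<in> S' then x ^ Suc n else 0) + x ^ Suc n * PS {i. n + 1 + i \<in> S'} x"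
    using PS_split[OF x0 x(2), of S n] PS_split[OF x0 x(2), of S' n] P P' pre by simp
  have xp: "x ^ Suc n > 0" using x by simp
  show False
  proof (cases "n \<in> S")
    case True
    hence nS': "n \<notin> S'" using n by simp
    have "x ^ Suc n * (1 + PS {i. n + 1 + i \<in> S} x) = x ^ Suc n * PS {i. n + 1 + i \<in> S'} x"
      using eq True nS' by (simp add: algebra_simps)
    hence "1 + PS {i. n + 1 + i \<in> S} x = PS {i. n + 1 + i \<in> S'} x" using xp by (metis mult_left_cancel order_less_irrefl)
    also have "\<dots> \<le> x / (1 - x)" by (rule PS_le_geo[OF x0 x(2)])
    finally show False using c1[OF True] by simp
  next
    case False
    hence nS': "n \<in> S'" using n by simp
    have "x ^ Suc n * PS {i. n + 1 + i \<in> S} x = x ^ Suc n * (1 + PS {i. n + 1 + i \<in> S'} x)"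
      using eq False nS' by (simp add: algebra_simps)
    hence "PS {i. n + 1 + i \<in> S} x = 1 + PS {i. n + 1 + i \<in> S'} x" using xp by (metis mult_left_cancel order_less_irrefl)
    moreover have "0 \<le> PS {i. n + 1 + i \<in> S'} x" by (rule PS_nonneg[OF x0 x(2)])
    ultimately show False using c0[OF False] by simp
  qed
qed

lemma poly_bound:
  fixes x :: real
  assumes x: "0 < x" "x < 1" and h: "2 * x - 1 \<le> x ^ 6"
  shows "x \<le> 13/25"
proof (rule ccontr)
  assume "\<not> x \<le> 13/25"
  hence xg: "13/25 < x" by simp
  have p: "(13/25::real) ^ i \<le> x ^ i" for i using xg by (intro power_mono) auto
  have "(13/25::real) + (13/25)^2 + (13/25)^3 + (13/25)^4 + (13/25)^5 \<le> x + x^2 + x^3 + x^4 + x^5"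
    using p[of 2] p[of 3] p[of 4] p[of 5] xg by linarith
  moreover have "(1::real) < (13/25) + (13/25)^2 + (13/25)^3 + (13/25)^4 + (13/25)^5" by (simp add: power_numeral_reduce)
  ultimately have s: "0 < x + x^2 + x^3 + x^4 + x^5 - 1" by simp
  have "0 < (1 - x) * (x + x^2 + x^3 + x^4 + x^5 - 1)" using s x by simp
  also have "\<dots> = 2 * x - 1 - x ^ 6" by (simp add: algebra_simps power2_eq_square power3_eq_cube power_numeral_reduce)
  finally show False using h by simp
qed

context
  fixes k :: nat and w :: "nat \<Rightarrow> bool" and x :: real
  assumes k: "k > 0" and x: "0 \<le> x" "x < 1" and P: "PS (code k w) x = 1"
begin

lemma cx_a: "2 * x - 1 \<le> x ^ (k + 6)"
proof -
  have "(\<Sum>s\<in>{s. s \<in> code k w \<and> s < k + 5}. x ^ Suc s) \<le> 1"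
    using PS_partial[OF x, of "code k w" "k+5"] P by simp
  moreover have "{s. s \<in> code k w \<and> s < k + 5} = {..<k+5}" unfolding code_def by auto
  ultimately have s: "(\<Sum>s<k+5. x ^ Suc s) \<le> 1" by simp
  have "(\<Sum>s<k+5. x ^ Suc s) = x * ((x ^ (k+5) - 1) / (x - 1))"
    using geometric_sum[of x "k+5"] x by (simp add: sum_distrib_left[symmetric])
  hence "x * ((x ^ (k+5) - 1) / (x - 1)) \<le> 1" using s by simp
  hence "x * (1 - x ^ (k+5)) \<le> 1 - x" using x by (simp add: field_simps)
  moreover have "x * x ^ (k + 5) = x ^ (k + 6)" by (simp add: power_add power_numeral_reduce)
  ultimately show ?thesis by (simp add: algebra_simps)
qed

lemma cx_b: "1/2 < x"
proof -
  have "1 \<le> x / (1 - x) - x ^ Suc (k+5)" using PS_upper_miss[OF x km_notin_code[OF k, of w]] P by linarith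
  moreover have "0 < x ^ Suc (k+5)"
  proof -
    have "x \<noteq> 0"
    proof
      assume "x = 0" thus False using P PS_le_geo[of 0 "code k w"] by simp
    qed
    thus ?thesis using x by simp
  qed
  ultimately have "1 < x / (1 - x)" by simp
  thus ?thesis using x by (simp add: field_simps)
qed

lemma cx_c: "x \<le> 13/25"
proof (rule poly_bound)
  show "0 < x" using cx_b by simp
  show "x < 1" using x by simp
  have "x ^ (k + 6) \<le> x ^ 6" using x by (intro power_decreasing) auto
  thus "2 * x - 1 \<le> x ^ 6" using cx_a by simp
qed

lemma cx_d: "x / (1 - x) - x ^ (k + 2) \<le> 1 - 4/5 * x ^ (k + 2)"
proof -
  have x1: "0 < 1 - x" using x by simp
  have x4: "x ^ 4 \<le> (1 - x) / 5"
  proof -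
    have "x ^ 4 \<le> (13/25) ^ 4" using cx_c x by (intro power_mono) auto
    also have "\<dots> \<le> (1 - 13/25) / 5" by (simp add: power_numeral_reduce)
    also have "\<dots> \<le> (1 - x) / 5" using cx_c by simp
    finally show ?thesis .
  qed
  have "x / (1 - x) - 1 = (2 * x - 1) / (1 - x)" using x1 by (simp add: field_simps)
  also have "\<dots> \<le> x ^ (k + 6) / (1 - x)" using cx_a x1 by (intro divide_right_mono) auto
  also have "x ^ (k + 6) = x ^ (k + 2) * x ^ 4"
  proof -
    have e: "k + 2 + 4 = k + 6" by simp
    show ?thesis using power_add[of x "k+2" 4] unfolding e .
  qed
  also have "x ^ (k + 2) * x ^ 4 / (1 - x) \<le> x ^ (k + 2) * ((1 - x) / 5) / (1 - x)"
    using x4 x x1 by (intro divide_right_mono mult_left_mono) auto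
  also have "\<dots> = x ^ (k + 2) / 5" using x1 by (simp add: field_simps)
  finally have h: "x / (1 - x) - 1 \<le> x ^ (k + 2) / 5" .
  show ?thesis using h by linarith
qed

lemma code_c0: "n \<notin> code k w \<Longrightarrow> PS {i. n + 1 + i \<in> code k w} x < 1"
proof -
  assume n: "n \<notin> code k w"
  obtain j where j: "j \<le> k + 1" "n + 1 + j \<notin> code k w" using code_O[OF k n] by auto
  have "PS {i. n + 1 + i \<in> code k w} x \<le> x / (1 - x) - x ^ Suc j"
    by (rule PS_upper_miss[OF x]) (use j in simp)
  also have "\<dots> \<le> x / (1 - x) - x ^ (k + 2)"
    using power_decreasing[of "Suc j" "k+2" x] x j by simp
  also have "\<dots> \<le> 1 - 4/5 * x ^ (k + 2)" by (rule cx_d)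
  also have "\<dots> < 1" using cx_b by simp
  finally show ?thesis .
qed

lemma code_c1: "n \<in> code k w \<Longrightarrow> x / (1 - x) < 1 + PS {i. n + 1 + i \<in> code k w} x"
proof -
  obtain j where j: "j \<le> k + 1" "n + 1 + j \<in> code k w" using code_Z[OF k] by blast
  have "x ^ (k + 2) \<le> x ^ Suc j" by (rule power_decreasing) (use x j in auto)
  also have "x ^ Suc j \<le> PS {i. n + 1 + i \<in> code k w} x"
    by (rule PS_lower_hit[OF x]) (use j in simp)
  finally have "x ^ (k + 2) \<le> PS {i. n + 1 + i \<in> code k w} x" .
  moreover have "0 < x ^ (k + 2)" using cx_b by simp
  ultimately show ?thesis using cx_d by simp
qed

lemma code_unique: "PS S' x = 1 \<Longrightarrow> S' = code k w"
  by (rule unique_exp[OF _ x(2) P]) (use cx_b code_c0 code_c1 in auto)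

end

lemma PS_lip5:
  fixes u v :: real
  assumes "0 \<le> u" "u \<le> 13/25" "0 \<le> v" "v \<le> 13/25"
  shows "\<bar>PS S v - PS S u\<bar> \<le> 5 * \<bar>v - u\<bar>"
proof -
  have main: "\<bar>PS S b - PS S a\<bar> \<le> 5 * \<bar>b - a\<bar>" if ab: "0 \<le> a" "a \<le> b" "b \<le> 13/25" for a b :: real
  proof -
    have b1: "b < 1" using ab by simp
    have "PS S b - PS S a \<le> b / (1 - b) - a / (1 - a)" by (rule PS_lip(2)[OF ab(1,2) b1])
    also have "\<dots> = (b - a) / ((1 - b) * (1 - a))" by (rule frac_diff) (use ab in auto)
    also have "\<dots> \<le> (b - a) / ((12/25) * (12/25))"
      using ab by (intro divide_left_mono mult_mono) auto
    also have "\<dots> \<le> 5 * (b - a)" using ab by simp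
    finally have "PS S b - PS S a \<le> 5 * (b - a)" .
    moreover have "0 \<le> PS S b - PS S a" by (rule PS_lip(1)[OF ab(1,2) b1])
    ultimately show ?thesis using ab by simp
  qed
  show ?thesis
  proof (cases "u \<le> v")
    case True thus ?thesis using main[of u v] assms by simp
  next
    case False thus ?thesis using main[of v u] assms by (simp add: abs_minus_commute)
  qed
qed

lemma geo_partial:
  fixes c :: real
  assumes "c \<noteq> 1"
  shows "(\<Sum>s<n. c ^ Suc s) = c * ((1 - c ^ n) / (1 - c))"
proof -
  have "(\<Sum>s<n. c ^ Suc s) = c * (\<Sum>s<n. c ^ s)" by (simp add: sum_distrib_left)
  also have "(\<Sum>s<n. c ^ s) = (c ^ n - 1) / (c - 1)" by (rule geometric_sum[OF assms])
  also have "\<dots> = (1 - c ^ n) / (1 - c)" using assms by (simp add: field_simps)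
  finally show ?thesis .
qed

lemma PS_cont: "continuous_on {1/2..13/25} (PS S)"
proof (rule lipschitz_on_continuous_on[of 5])
  show "5-lipschitz_on {1/2..13/25} (PS S)"
    by (rule lipschitz_onI) (use PS_lip5 in \<open>auto simp: dist_real_def\<close>)
qed

lemma exists_x:
  assumes k: "k > 0"
  shows "\<exists>x. 1/2 \<le> x \<and> x \<le> 13/25 \<and> PS (code k w) x = 1"
proof (rule IVT'[of "PS (code k w)" "1/2" 1 "13/25", OF _ _ _ PS_cont])
  have "PS (code k w) (1/2) \<le> (1/2) / (1 - 1/2) - (1/2) ^ Suc (k+5)"
    by (rule PS_upper_miss[OF _ _ km_notin_code[OF k]]) auto
  also have "\<dots> \<le> 1" by simp
  finally show "PS (code k w) (1/2) \<le> 1" .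
  have "{s. s \<in> code k w \<and> s < k + 5} = {..<k+5}" unfolding code_def by auto
  hence "(\<Sum>s<k+5. (13/25::real) ^ Suc s) \<le> PS (code k w) (13/25)"
    using PS_partial[of "13/25" "code k w" "k+5"] by simp
  moreover have "(\<Sum>s<k+5. (13/25::real) ^ Suc s) = (13/25) * ((1 - (13/25) ^ (k+5)) / (12/25))"
    using geo_partial[of "13/25::real" "k+5"] by simp
  moreover have "(13/25::real) ^ (k+5) \<le> 1/13"
  proof -
    have "(13/25::real) ^ (k+5) \<le> (13/25) ^ 6" by (rule power_decreasing) (use k in auto)
    also have "\<dots> \<le> 1/13" by (simp add: power_numeral_reduce)
    finally show ?thesis .
  qed
  moreover have "(13/25) * ((1 - (13/25::real) ^ (k+5)) / (12/25)) = 13/12 - 13/12 * (13/25) ^ (k+5)"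
    by (simp add: field_simps)
  ultimately show "1 \<le> PS (code k w) (13/25)" by linarith
qed simp

definition xw :: "nat \<Rightarrow> (nat \<Rightarrow> bool) \<Rightarrow> real" where
  "xw k w = (SOME x. 1/2 \<le> x \<and> x \<le> 13/25 \<and> PS (code k w) x = 1)"

definition qw :: "nat \<Rightarrow> (nat \<Rightarrow> bool) \<Rightarrow> real" where
  "qw k w = - log 2 (xw k w)"

lemma xw_props:
  assumes k: "k > 0"
  shows "1/2 < xw k w" "xw k w \<le> 13/25" "PS (code k w) (xw k w) = 1"
proof -
  have h: "1/2 \<le> xw k w \<and> xw k w \<le> 13/25 \<and> PS (code k w) (xw k w) = 1"
    unfolding xw_def by (rule someI_ex[OF exists_x[OF k]])
  thus "xw k w \<le> 13/25" "PS (code k w) (xw k w) = 1" by auto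
  show "1/2 < xw k w" by (rule cx_b[OF k]) (use h in auto)
qed

definition Aset :: "real set" where
  "Aset = {q. 0 < q \<and> q < 1 \<and> (\<exists>!X. (\<exists>S. S \<noteq> {} \<and> X = gap_shift S) \<and> entropy X = q)}"

lemma qw_in_A:
  assumes k: "k > 0"
  shows "qw k w \<in> Aset"
proof -
  let ?x = "xw k w"
  let ?q = "qw k w"
  have x: "1/2 < ?x" "?x \<le> 13/25" "PS (code k w) ?x = 1" using xw_props[OF k] by auto
  have q: "0 < ?q" "?q < 1"
  proof -
    have "log 2 ?x < log 2 1" using x by (subst log_less_cancel_iff) auto
    thus "0 < ?q" unfolding qw_def by simp
    have "log 2 (1/2) < log 2 ?x" using x by (subst log_less_cancel_iff) auto
    thus "?q < 1" unfolding qw_def by (simp add: log_divide)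
  qed
  have pq: "2 powr - ?q = ?x" unfolding qw_def using x by simp
  have ent: "entropy (gap_shift S) = ?q \<longleftrightarrow> PS S ?x = 1" for S
    using entropy_iff[OF q, of S] pq by simp
  have "\<exists>!X. (\<exists>S. S \<noteq> {} \<and> X = gap_shift S) \<and> entropy X = ?q"
  proof (rule ex1I[of _ "gap_shift (code k w)"])
    show "(\<exists>S. S \<noteq> {} \<and> gap_shift (code k w) = gap_shift S) \<and> entropy (gap_shift (code k w)) = ?q"
      using ent x zero_in_code[of k w] by blast
    fix X assume "(\<exists>S. S \<noteq> {} \<and> X = gap_shift S) \<and> entropy X = ?q"
    then obtain S where S: "X = gap_shift S" "entropy (gap_shift S) = ?q" by auto
    have PSx: "PS S ?x = 1" using ent S by simp
    have "S = code k w" by (rule code_unique[OF k _ _ x(3) PSx]) (use x in auto)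
    thus "X = gap_shift (code k w)" using S by simp
  qed
  thus ?thesis unfolding Aset_def using q by simp
qed

definition bin :: "(nat \<Rightarrow> bool) \<Rightarrow> real" where
  "bin w = (\<Sum>i. if w i then (1/2) ^ Suc i else 0)"

lemma half_summable: "summable (\<lambda>i. (1/2::real) ^ Suc i)" by (rule geo_suc(1)) auto

lemma bin_summable: "summable (\<lambda>i. if w i then (1/2::real) ^ Suc i else 0)"
  by (rule summable_comparison_test'[OF half_summable]) auto

lemma bin_diff:
  assumes agree: "\<And>i. i < p \<Longrightarrow> w i = w' i"
  shows "\<bar>bin w - bin w'\<bar> \<le> (1/2) ^ p"
proof -
  define d where "d = (\<lambda>i. (if w i then (1/2::real) ^ Suc i else 0) - (if w' i then (1/2) ^ Suc i else 0))"
  have sd: "summable d" unfolding d_def by (intro summable_diff bin_summable)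
  have "bin w - bin w' = suminf d" unfolding bin_def d_def by (rule suminf_diff[OF bin_summable bin_summable])
  also have "\<dots> = (\<Sum>i. d (i + p)) + (\<Sum>i<p. d i)" by (rule suminf_split_initial_segment[OF sd])
  also have "(\<Sum>i<p. d i) = 0" unfolding d_def using agree by (intro sum.neutral) auto
  finally have e: "bin w - bin w' = (\<Sum>i. d (i + p))" by simp
  have "\<bar>\<Sum>i. d (i + p)\<bar> \<le> (\<Sum>i. (1/2) ^ p * (1/2) ^ Suc i)"
  proof (rule norm_suminf_le[of "\<lambda>i. d (i + p)", unfolded real_norm_def])
    show "\<bar>d (i + p)\<bar> \<le> (1/2) ^ p * (1/2) ^ Suc i" for i
      unfolding d_def by (auto simp: power_add)
    show "summable (\<lambda>i. (1/2::real) ^ p * (1/2) ^ Suc i)" by (rule summable_mult[OF half_summable])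
  qed
  also have "\<dots> = (1/2) ^ p * (\<Sum>i. (1/2::real) ^ Suc i)" by (rule suminf_mult[OF half_summable])
  also have "(\<Sum>i. (1/2::real) ^ Suc i) = 1" using geo_suc(2)[of "1/2"] by simp
  finally show ?thesis using e by simp
qed

lemma separation:
  assumes k: "k > 0" and agree: "\<And>b. b < p \<Longrightarrow> w b = w' b" and wp: "\<not> w p" "w' p"
  shows "xw k w - xw k w' \<ge> (1/2) ^ (pos k p + k + 6)"
proof -
  define x where "x = xw k w"
  define x' where "x' = xw k w'"
  define m where "m = pos k p"
  define S where "S = code k w"
  define S' where "S' = code k w'"
  have xb: "1/2 < x" "x \<le> 13/25" "PS S x = 1" unfolding x_def S_def using xw_props[OF k] by auto
  have xb': "1/2 < x'" "x' \<le> 13/25" "PS S' x' = 1" unfolding x'_def S'_def using xw_props[OF k] by auto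
  have x0': "0 \<le> x'" "x' < 1" using xb' by auto
  have x0: "0 \<le> x" "x < 1" using xb by auto
  have mS: "m \<notin> S" unfolding m_def S_def using pos_in_code_iff[OF k] wp by simp
  have mS': "m \<in> S'" unfolding m_def S'_def using pos_in_code_iff[OF k] wp by simp
  have agS: "n \<in> S \<longleftrightarrow> n \<in> S'" if "n < m" for n
    unfolding S_def S'_def by (rule code_agree[OF k]) (use agree that m_def in auto)
  have pre: "(\<Sum>i<m. if i \<in> S then x' ^ Suc i else 0) = (\<Sum>i<m. if i \<in> S' then x' ^ Suc i else 0)"
    by (rule sum.cong) (use agS in auto)
  let ?T = "{i. m + 1 + i \<in> S}"
  let ?T' = "{i. m + 1 + i \<in> S'}"
  have e1: "PS S x' = (\<Sum>i<m. if i \<in> S then x' ^ Suc i else 0) + x' ^ Suc m * PS ?T x'"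
    using PS_split[OF x0', of S m] mS by simp
  have e2: "PS S' x' = (\<Sum>i<m. if i \<in> S' then x' ^ Suc i else 0) + x' ^ Suc m + x' ^ Suc m * PS ?T' x'"
    using PS_split[OF x0', of S' m] mS' by simp
  obtain j where j: "j \<le> k + 1" "m + 1 + j \<notin> S" using code_O[OF k mS[unfolded S_def]] S_def by auto
  have "PS ?T x' \<le> x' / (1 - x') - x' ^ Suc j" by (rule PS_upper_miss[OF x0']) (use j in simp)
  also have "\<dots> \<le> x' / (1 - x') - x' ^ (k + 2)" using power_decreasing[of "Suc j" "k+2" x'] x0' j by simp
  also have "\<dots> \<le> 1 - 4/5 * x' ^ (k + 2)" by (rule cx_d[OF k x0' xb'(3)[unfolded S'_def]])
  finally have T: "PS ?T x' \<le> 1 - 4/5 * x' ^ (k + 2)" .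
  have T'0: "0 \<le> PS ?T' x'" by (rule PS_nonneg[OF x0'])
  have xm: "0 < x' ^ Suc m" using xb' by simp
  have "1 - PS S x' = x' ^ Suc m * (1 + PS ?T' x' - PS ?T x')"
    using e1 e2 pre xb'(3) by (simp add: algebra_simps)
  also have "\<dots> \<ge> x' ^ Suc m * (4/5 * x' ^ (k + 2))"
    using T T'0 xm by (intro mult_left_mono) auto
  finally have g: "x' ^ Suc m * (4/5 * x' ^ (k + 2)) \<le> 1 - PS S x'" .
  have "(1/2) ^ (m + k + 3) \<le> x' ^ (m + k + 3)" using xb' by (intro power_mono) auto
  also have "x' ^ (m + k + 3) = x' ^ Suc m * x' ^ (k + 2)"
  proof -
    have e: "Suc m + (k + 2) = m + k + 3" by simp
    show ?thesis using power_add[of x' "Suc m" "k+2"] unfolding e .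
  qed
  finally have h: "4/5 * (1/2) ^ (m + k + 3) \<le> 1 - PS S x'" using g by simp
  have "0 < 4/5 * (1/2::real) ^ (m + k + 3)" by simp
  hence pos: "0 < 1 - PS S x'" using h by linarith
  have xx: "x' < x"
  proof (rule ccontr)
    assume "\<not> x' < x"
    hence "0 \<le> PS S x' - PS S x" using PS_lip(1)[of x x' S] x0 x0' by simp
    thus False using pos xb(3) by simp
  qed
  have "PS S x - PS S x' \<le> 5 * (x - x')" using PS_lip5[of x' x S] xb xb' xx by simp
  hence "4/5 * (1/2) ^ (m + k + 3) \<le> 5 * (x - x')" using h xb(3) by simp
  hence "(1/2) ^ (m + k + 6) \<le> x - x'"
    using xx by (simp add: power_add power_numeral_reduce ac_simps; linarith)
  thus ?thesis unfolding x_def x'_def m_def by simp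
qed

lemma log_sep:
  fixes a b :: real
  assumes "0 < a" "a \<le> b" "b < 1"
  shows "b - a \<le> log 2 b - log 2 a"
proof -
  have b0: "0 < b" using assms by simp
  have "ln (a / b) \<le> a / b - 1" using assms b0 by (intro ln_le_minus_one) simp
  hence l: "1 - a / b \<le> ln b - ln a" using assms b0 by (simp add: ln_div)
  have "b - a \<le> 1 - a / b"
  proof -
    have "(b - a) * b \<le> (b - a)" using assms by (intro mult_left_le) auto
    thus ?thesis using b0 by (simp add: field_simps)
  qed
  also have "\<dots> \<le> ln b - ln a" by (rule l)
  also have "\<dots> \<le> (ln b - ln a) / ln 2"
  proof -
    have "0 \<le> ln b - ln a" using assms by simp
    moreover have "0 < ln (2::real)" "ln (2::real) \<le> 1" using ln_le_minus_one[of 2] by auto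
    ultimately show ?thesis by (simp add: le_divide_eq mult_left_le)
  qed
  also have "\<dots> = log 2 b - log 2 a" by (simp add: log_def diff_divide_distrib)
  finally show ?thesis .
qed

lemma main_ineq:
  assumes k: "k > 0"
  shows "(1/2::real) ^ p \<le> 2 ^ (2*k+14) * ((1/2) ^ (pos k p + k + 6)) powr (real k / real (k + 2))"
proof -
  define \<alpha> where "\<alpha> = real k / real (k + 2)"
  define N where "N = pos k p + k + 6"
  have a01: "0 \<le> \<alpha>" "\<alpha> \<le> 1" unfolding \<alpha>_def by auto
  have Nn: "N = (2*k+14) + (p div k) * (k+2) + p mod k" unfolding N_def pos_def by simp
  have N: "real N = real (2*k+14) + real (p div k) * real (k+2) + real (p mod k)"
    unfolding Nn by (simp only: of_nat_add of_nat_mult)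
  have pn: "p = (p div k) * k + p mod k" by simp
  have p: "real p = real (p div k) * real k + real (p mod k)"
    by (subst pn) (simp only: of_nat_add of_nat_mult)
  have "\<alpha> * real N \<le> real (2*k+14) + real p"
  proof -
    have "\<alpha> * (real (p div k) * real (k+2)) = real (p div k) * real k"
      unfolding \<alpha>_def by (simp add: field_simps del: of_nat_add)
    moreover have "\<alpha> * real N = \<alpha> * real (2*k+14) + \<alpha> * (real (p div k) * real (k+2)) + \<alpha> * real (p mod k)"
      unfolding N by (simp only: distrib_left)
    ultimately have "\<alpha> * real N = \<alpha> * real (2*k+14) + real (p div k) * real k + \<alpha> * real (p mod k)"
      by simp
    moreover have "\<alpha> * real (2*k+14) \<le> real (2*k+14)" using a01 by (intro mult_left_le_one_le) auto
    moreover have "\<alpha> * real (p mod k) \<le> real (p mod k)" using a01 by (intro mult_left_le_one_le) auto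
    ultimately show ?thesis using p by linarith
  qed
  have h: "(1/2::real) ^ N = 2 powr (- real N)"
    by (simp add: powr_minus_divide powr_realpow power_one_over[symmetric])
  have hp: "(1/2::real) ^ p = 2 powr (- real p)"
    by (simp add: powr_minus_divide powr_realpow power_one_over[symmetric])
  have i1: "2 powr (- real p) \<le> 2 powr (real (2*k+14) - \<alpha> * real N)"
    using \<open>\<alpha> * real N \<le> _\<close> by simp
  have i2: "2 powr (real (2*k+14) - \<alpha> * real N) = 2 powr real (2*k+14) * 2 powr (- real N * \<alpha>)"
    by (simp add: powr_add[symmetric] algebra_simps)
  have i3: "2 powr (- real N * \<alpha>) = ((1/2::real) ^ N) powr \<alpha>" unfolding h by (simp add: powr_powr)
  have i4: "2 powr real (2*k+14) = (2::real) ^ (2*k+14)" by (rule powr_realpow) simp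
  have "(1/2::real) ^ p \<le> 2 powr (real (2*k+14) - \<alpha> * real N)" unfolding hp by (rule i1)
  also have "\<dots> = 2 powr real (2*k+14) * 2 powr (- real N * \<alpha>)" by (rule i2)
  also have "\<dots> = (2::real) ^ (2*k+14) * ((1/2::real) ^ N) powr \<alpha>" by (simp only: i3 i4)
  finally have "(1/2::real) ^ p \<le> (2::real) ^ (2*k+14) * ((1/2::real) ^ N) powr \<alpha>" .
  thus ?thesis unfolding \<alpha>_def N_def .
qed

lemma holder:
  assumes k: "k > 0"
  shows "\<bar>bin w - bin w'\<bar> \<le> 2 ^ (2*k+14) * \<bar>qw k w - qw k w'\<bar> powr (real k / real (k + 2))"
proof (cases "w = w'")
  case True thus ?thesis by simp
next
  case False
  hence ex: "\<exists>b. w b \<noteq> w' b" by auto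
  define p where "p = (LEAST b. w b \<noteq> w' b)"
  have wp: "w p \<noteq> w' p" unfolding p_def by (rule LeastI_ex[OF ex])
  have agree: "w b = w' b" if "b < p" for b using not_less_Least[OF that[unfolded p_def]] by blast
  define N where "N = pos k p + k + 6"
  define \<alpha> where "\<alpha> = real k / real (k + 2)"
  have a0: "0 \<le> \<alpha>" unfolding \<alpha>_def by simp
  have xb: "1/2 < xw k v" "xw k v \<le> 13/25" for v using xw_props[OF k] by auto
  have sepx: "(1/2) ^ N \<le> \<bar>xw k w - xw k w'\<bar>"
  proof (cases "w' p")
    case True
    hence "(1/2) ^ N \<le> xw k w - xw k w'" unfolding N_def
      using separation[OF k agree] wp by simp
    thus ?thesis by simp
  next
    case False
    hence "(1/2) ^ N \<le> xw k w' - xw k w" unfolding N_def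
      using separation[OF k, of p w' w] agree wp by simp
    thus ?thesis by simp
  qed
  have sepq: "\<bar>xw k w - xw k w'\<bar> \<le> \<bar>qw k w - qw k w'\<bar>"
  proof (cases "xw k w \<le> xw k w'")
    case True
    have "xw k w' - xw k w \<le> log 2 (xw k w') - log 2 (xw k w)"
      by (rule log_sep) (use True xb[of w] xb[of w'] in auto)
    thus ?thesis using True unfolding qw_def by simp
  next
    case False
    have "xw k w - xw k w' \<le> log 2 (xw k w) - log 2 (xw k w')"
      by (rule log_sep) (use False xb[of w] xb[of w'] in auto)
    thus ?thesis using False unfolding qw_def by simp
  qed
  have "\<bar>bin w - bin w'\<bar> \<le> (1/2) ^ p" by (rule bin_diff) (use agree in auto)
  also have "\<dots> \<le> 2 ^ (2*k+14) * ((1/2) ^ N) powr \<alpha>" unfolding N_def \<alpha>_def by (rule main_ineq[OF k])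
  also have "\<dots> \<le> 2 ^ (2*k+14) * \<bar>qw k w - qw k w'\<bar> powr \<alpha>"
    using sepx sepq a0 by (intro mult_left_mono powr_mono2) auto
  finally show ?thesis unfolding \<alpha>_def .
qed

lemma bin_nonneg: "0 \<le> bin w"
  unfolding bin_def by (rule suminf_nonneg[OF bin_summable]) auto

lemma bin_le1: "bin w \<le> 1"
proof -
  have "bin w \<le> (\<Sum>i. (1/2::real) ^ Suc i)" unfolding bin_def
    by (rule suminf_le[OF _ bin_summable half_summable]) auto
  thus ?thesis using geo_suc(2)[of "1/2"] by simp
qed

lemma floor_step:
  fixes t :: real
  shows "\<lfloor>2 ^ Suc n * t\<rfloor> = 2 * \<lfloor>2 ^ n * t\<rfloor> + (if odd \<lfloor>2 ^ Suc n * t\<rfloor> then 1 else 0)"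
proof -
  define a where "a = \<lfloor>2 ^ n * t\<rfloor>"
  have a: "real_of_int a \<le> 2 ^ n * t" "2 ^ n * t < real_of_int a + 1" unfolding a_def by linarith+
  have b: "2 * real_of_int a \<le> 2 ^ Suc n * t" "2 ^ Suc n * t < 2 * real_of_int a + 2" using a by auto
  have lo: "2 * a \<le> \<lfloor>2 ^ Suc n * t\<rfloor>" using b(1) by (simp add: le_floor_iff)
  have hi: "\<lfloor>2 ^ Suc n * t\<rfloor> \<le> 2 * a + 1" using b(2) by (simp add: floor_le_iff)
  show ?thesis
  proof (cases "\<lfloor>2 ^ Suc n * t\<rfloor> = 2 * a")
    case True thus ?thesis unfolding a_def by simp
  next
    case False
    hence "\<lfloor>2 ^ Suc n * t\<rfloor> = 2 * a + 1" using lo hi by linarith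
    thus ?thesis unfolding a_def by simp
  qed
qed

lemma bin_surj:
  fixes t :: real
  assumes t: "0 \<le> t" "t < 1"
  shows "\<exists>w. bin w = t"
proof -
  define f where "f = (\<lambda>n. \<lfloor>2 ^ n * t\<rfloor>)"
  define w where "w = (\<lambda>i. odd (f (Suc i)))"
  let ?g = "\<lambda>i. if w i then (1/2::real) ^ Suc i else 0"
  have ps: "(\<Sum>i<n. ?g i) = real_of_int (f n) / 2 ^ n" for n
  proof (induction n)
    case 0 show ?case unfolding f_def using t by (simp add: floor_eq_iff)
  next
    case (Suc n)
    have st: "f (Suc n) = 2 * f n + (if w n then 1 else 0)" unfolding f_def w_def
      using floor_step[of n t] unfolding f_def by simp
    have "(\<Sum>i<Suc n. ?g i) = real_of_int (f n) / 2 ^ n + ?g n" using Suc by simp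
    also have "\<dots> = real_of_int (f (Suc n)) / 2 ^ Suc n"
      unfolding st by (simp add: field_simps power_one_over)
    finally show ?case .
  qed
  have l1: "(\<lambda>n. \<Sum>i<n. ?g i) \<longlonglongrightarrow> bin w" unfolding bin_def
    by (rule summable_LIMSEQ[OF bin_summable])
  have l2: "(\<lambda>n. real_of_int (f n) / 2 ^ n) \<longlonglongrightarrow> t"
  proof -
    have b: "\<bar>real_of_int (f n) / 2 ^ n - t\<bar> \<le> (1/2) ^ n" for n
    proof -
      have "real_of_int (f n) \<le> 2 ^ n * t" "2 ^ n * t < real_of_int (f n) + 1" unfolding f_def by linarith+
      hence "\<bar>real_of_int (f n) - 2 ^ n * t\<bar> \<le> 1" by simp
      hence "\<bar>real_of_int (f n) - 2 ^ n * t\<bar> / 2 ^ n \<le> 1 / 2 ^ n" by (intro divide_right_mono) auto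
      moreover have "\<bar>real_of_int (f n) - 2 ^ n * t\<bar> / 2 ^ n = \<bar>real_of_int (f n) / 2 ^ n - t\<bar>"
        by (simp add: field_simps abs_div)
      ultimately show ?thesis by (simp add: power_one_over)
    qed
    have z: "(\<lambda>n. (1/2::real) ^ n) \<longlonglongrightarrow> 0" by (rule LIMSEQ_power_zero) simp
    have d: "(\<lambda>n. real_of_int (f n) / 2 ^ n - t) \<longlonglongrightarrow> 0"
      by (rule Lim_null_comparison[OF _ z]) (use b in \<open>auto intro: always_eventually\<close>)
    have "(\<lambda>n. (real_of_int (f n) / 2 ^ n - t) + t) \<longlonglongrightarrow> 0 + t"
      by (intro tendsto_add d tendsto_const)
    thus ?thesis by simp
  qed
  have "bin w = t" using LIMSEQ_unique[OF l1] l2 ps by simp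
  thus ?thesis by blast
qed

lemma sup_inf_diam:
  fixes V :: "real set"
  assumes b: "bounded V" and ne: "V \<noteq> {}"
  shows "Sup V - Inf V \<le> diameter V"
proof -
  have ba: "bdd_above V" and bb: "bdd_below V" using b bounded_imp_bdd_above bounded_imp_bdd_below by auto
  have "Sup V \<le> u + diameter V" if u: "u \<in> V" for u
  proof (rule cSup_least[OF ne])
    fix v assume v: "v \<in> V"
    have "dist v u \<le> diameter V" by (rule diameter_bounded_bound[OF b v u])
    thus "v \<le> u + diameter V" by (simp add: dist_real_def)
  qed
  hence "Sup V - diameter V \<le> Inf V" using ne by (intro cInf_greatest) (auto simp: algebra_simps)
  thus ?thesis by simp
qed

lemma cover_length:
  fixes V :: "nat \<Rightarrow> real set"
  assumes cov: "{0..<1} \<subseteq> (\<Union>i. V i)" and bnd: "\<And>i. bounded (V i)"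
  shows "1 \<le> (\<Sum>i. ennreal (diameter (V i)))"
proof -
  define H where "H = (\<lambda>i. if V i = {} then {} else {Inf (V i) .. Sup (V i)})"
  have VH: "V i \<subseteq> H i" for i
  proof (cases "V i = {}")
    case False
    have "bdd_above (V i)" "bdd_below (V i)" using bnd[of i] bounded_imp_bdd_above bounded_imp_bdd_below by auto
    thus ?thesis unfolding H_def using False by (auto intro: cInf_lower cSup_upper)
  qed (simp add: H_def)
  have HS: "range H \<subseteq> sets lborel" unfolding H_def by auto
  have HM: "emeasure lborel (H i) \<le> ennreal (diameter (V i))" for i
  proof (cases "V i = {}")
    case False
    have le: "Inf (V i) \<le> Sup (V i)"
    proof -
      obtain v where v: "v \<in> V i" using False by auto
      have "bdd_above (V i)" "bdd_below (V i)" using bnd[of i] bounded_imp_bdd_above bounded_imp_bdd_below by auto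
      thus ?thesis using v by (meson cInf_lower cSup_upper order_trans)
    qed
    have "emeasure lborel (H i) = ennreal (Sup (V i) - Inf (V i))" unfolding H_def using False le by simp
    also have "\<dots> \<le> ennreal (diameter (V i))" using sup_inf_diam[OF bnd False] by (simp add: ennreal_leI)
    finally show ?thesis .
  qed (simp add: H_def)
  have "1 = emeasure lborel {0::real..<1}" by simp
  also have "\<dots> \<le> emeasure lborel (\<Union>i. H i)"
  proof (rule emeasure_mono)
    show "{0..<1} \<subseteq> (\<Union>i. H i)" using cov VH by blast
    show "(\<Union>i. H i) \<in> sets lborel" using HS by (rule sets.countable_UN)
  qed
  also have "\<dots> \<le> (\<Sum>i. emeasure lborel (H i))" by (rule emeasure_subadditive_countably[OF HS])
  also have "\<dots> \<le> (\<Sum>i. ennreal (diameter (V i)))" by (rule suminf_le[OF HM summableI summableI])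
  finally show ?thesis .
qed

lemma hm_lower:
  assumes k: "k > 0" and s: "0 \<le> s" "s \<le> real k / real (k + 2)" and sub: "range (qw k) \<subseteq> A"
  shows "ennreal (1 / 2 ^ (2*k+14)) \<le> hausdorff_measure s A"
proof -
  define K :: real where "K = 2 ^ (2*k+14)"
  define \<alpha> where "\<alpha> = real k / real (k + 2)"
  have K: "K > 0" unfolding K_def by simp
  define C where "C = {U :: nat \<Rightarrow> real set. A \<subseteq> (\<Union>i. U i) \<and> (\<forall>i. bounded (U i) \<and> diameter (U i) \<le> 1)}"
  have "ennreal (1 / K) \<le> (INF U\<in>C. (\<Sum>i. ennreal (diameter (U i) powr s)))"
  proof (rule INF_greatest)
    fix U assume U: "U \<in> C"
    define V where "V = (\<lambda>i. bin ` {w. qw k w \<in> U i})"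
    have cov: "{0..<1} \<subseteq> (\<Union>i. V i)"
    proof
      fix t :: real assume "t \<in> {0..<1}"
      then obtain w where w: "bin w = t" using bin_surj by auto
      have "qw k w \<in> A" using sub by auto
      then obtain i where "qw k w \<in> U i" using U unfolding C_def by auto
      thus "t \<in> (\<Union>i. V i)" unfolding V_def using w by blast
    qed
    have bV: "bounded (V i)" for i
      by (rule bounded_subset[of "{0..1}"]) (use bin_nonneg bin_le1 in \<open>auto simp: V_def\<close>)
    have dV: "diameter (V i) \<le> K * diameter (U i) powr s" for i
    proof (rule diameter_le)
      show "V i \<noteq> {} \<or> 0 \<le> K * diameter (U i) powr s" using K by simp
      fix a b assume a: "a \<in> V i" and b: "b \<in> V i"
      then obtain w w' where ww: "a = bin w" "b = bin w'" "qw k w \<in> U i" "qw k w' \<in> U i"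
        unfolding V_def by auto
      have bU: "bounded (U i)" and dU: "diameter (U i) \<le> 1" using U unfolding C_def by auto
      have d0: "0 \<le> diameter (U i)" using ww(3) by (meson bU diameter_bounded_bound zero_le_dist order_trans)
      have "norm (a - b) = \<bar>bin w - bin w'\<bar>" using ww by simp
      also have "\<dots> \<le> K * \<bar>qw k w - qw k w'\<bar> powr \<alpha>" unfolding K_def \<alpha>_def by (rule holder[OF k])
      also have "\<dots> \<le> K * diameter (U i) powr \<alpha>"
      proof -
        have "\<bar>qw k w - qw k w'\<bar> \<le> diameter (U i)"
          using diameter_bounded_bound[OF bU ww(3) ww(4)] by (simp add: dist_real_def)
        thus ?thesis using K unfolding \<alpha>_def by (intro mult_left_mono powr_mono2) auto
      qed
      also have "\<dots> \<le> K * diameter (U i) powr s"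
        using K d0 dU s unfolding \<alpha>_def by (intro mult_left_mono powr_mono') auto
      finally show "norm (a - b) \<le> K * diameter (U i) powr s" .
    qed
    have "1 \<le> (\<Sum>i. ennreal (diameter (V i)))" by (rule cover_length[OF cov bV])
    also have "\<dots> \<le> (\<Sum>i. ennreal K * ennreal (diameter (U i) powr s))"
      by (rule suminf_le[OF _ summableI summableI]) (use dV K in \<open>auto simp: ennreal_mult[symmetric] intro: ennreal_leI\<close>)
    also have "\<dots> = ennreal K * (\<Sum>i. ennreal (diameter (U i) powr s))" by simp
    finally have one: "1 \<le> ennreal K * (\<Sum>i. ennreal (diameter (U i) powr s))" .
    have "ennreal (1 / K) = ennreal (1 / K) * 1" by simp
    also have "\<dots> \<le> ennreal (1 / K) * (ennreal K * (\<Sum>i. ennreal (diameter (U i) powr s)))"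
      by (rule mult_left_mono[OF one]) simp
    also have "\<dots> = (\<Sum>i. ennreal (diameter (U i) powr s))"
      using K by (simp add: mult.assoc[symmetric] ennreal_mult[symmetric])
    finally show "ennreal (1 / K) \<le> (\<Sum>i. ennreal (diameter (U i) powr s))" .
  qed
  also have "\<dots> \<le> hausdorff_measure s A"
    unfolding hausdorff_measure_def C_def by (rule SUP_upper[of 1]) simp
  finally show ?thesis unfolding K_def by simp
qed

lemma unit_cover:
  fixes t :: real
  assumes t: "0 \<le> t" "t \<le> 1" and N: "N > 0"
  shows "\<exists>i<N. t \<in> {real i / real N .. (real i + 1) / real N}"
proof (cases "t = 1")
  case True
  thus ?thesis using N by (intro exI[of _ "N - 1"]) (auto simp: of_nat_diff divide_simps)
next
  case False
  hence t1: "t < 1" using t by simp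
  define i where "i = nat \<lfloor>t * real N\<rfloor>"
  have fl: "real_of_int \<lfloor>t * real N\<rfloor> \<le> t * real N" "t * real N < real_of_int \<lfloor>t * real N\<rfloor> + 1" by linarith+
  have f0: "0 \<le> \<lfloor>t * real N\<rfloor>" using t N by simp
  have ri: "real i = real_of_int \<lfloor>t * real N\<rfloor>" unfolding i_def using f0 by simp
  have "t * real N < real N" using t1 N by simp
  hence "real i < real N" using ri fl by linarith
  hence iN: "i < N" by simp
  have "real i / real N \<le> t" using ri fl N by (simp add: divide_simps)
  moreover have "t \<le> (real i + 1) / real N" using ri fl N by (simp add: divide_simps)
  ultimately show ?thesis using iN by auto
qed

lemma hm_upper:
  assumes A: "A \<subseteq> {0..1}" and s: "s > 1"
  shows "hausdorff_measure s A = 0"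
proof -
  have inf0: "(INF U\<in>{U :: nat \<Rightarrow> real set. A \<subseteq> (\<Union>i. U i) \<and> (\<forall>i. bounded (U i) \<and> diameter (U i) \<le> \<delta>)}.
                 (\<Sum>i. ennreal (diameter (U i) powr s))) = 0" if \<delta>: "\<delta> > 0" for \<delta>
  proof -
    let ?C = "{U :: nat \<Rightarrow> real set. A \<subseteq> (\<Union>i. U i) \<and> (\<forall>i. bounded (U i) \<and> diameter (U i) \<le> \<delta>)}"
    have "(INF U\<in>?C. (\<Sum>i. ennreal (diameter (U i) powr s))) \<le> 0 + ennreal e" if e: "e > 0" for e
    proof -
      have l1: "(\<lambda>N. real N powr (1 - s)) \<longlonglongrightarrow> 0" using s by (intro tendsto_neg_powr filterlim_real_sequentially) auto
      have ev1: "eventually (\<lambda>N. real N powr (1 - s) < e) sequentially" using order_tendstoD(2)[OF l1 e] .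
      have ev2: "eventually (\<lambda>N. 1 / real N \<le> \<delta>) sequentially"
      proof -
        obtain M :: nat where M: "real M > 1 / \<delta>" using reals_Archimedean2 by blast
        show ?thesis
        proof (rule eventually_sequentiallyI[of M])
          fix N assume "M \<le> N"
          hence "1 / \<delta> < real N" using M by linarith
          thus "1 / real N \<le> \<delta>" using \<delta> by (simp add: divide_simps mult.commute)
        qed
      qed
      obtain N0 where N0: "\<And>N. N \<ge> N0 \<Longrightarrow> real N powr (1 - s) < e \<and> 1 / real N \<le> \<delta>"
        using eventually_conj[OF ev1 ev2] unfolding eventually_sequentially by blast
      define N where "N = max N0 1"
      have N: "N > 0" "real N powr (1 - s) < e" "1 / real N \<le> \<delta>" using N0[of N] unfolding N_def by auto
      define U where "U = (\<lambda>i. if i < N then {real i / real N .. (real i + 1) / real N} else {})"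
      have dU: "diameter (U i) = (if i < N then 1 / real N else 0)" for i
      proof (cases "i < N")
        case True
        have e1: "(real i + 1) / real N - real i / real N = 1 / real N" by (simp add: diff_divide_distrib[symmetric])
        have e2: "real i / real N \<le> (real i + 1) / real N" using N by (intro divide_right_mono) auto
        have "diameter (U i) = (real i + 1) / real N - real i / real N"
          unfolding U_def using True e2 by (simp del: diameter_closed_interval add: diameter_closed_interval[of "real i / real N"])
        thus ?thesis using True e1 by simp
      qed (simp add: U_def)
      have UC: "U \<in> ?C"
      proof (intro CollectI conjI allI)
        show "A \<subseteq> (\<Union>i. U i)"
        proof
          fix t assume "t \<in> A"
          hence "0 \<le> t" "t \<le> 1" using A by auto
          then obtain i where "i < N" "t \<in> {real i / real N .. (real i + 1) / real N}" using unit_cover N by blast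
          thus "t \<in> (\<Union>i. U i)" unfolding U_def by auto
        qed
        fix i
        show "bounded (U i)" unfolding U_def by auto
        show "diameter (U i) \<le> \<delta>" unfolding dU using N \<delta> by auto
      qed
      have "(\<Sum>i. ennreal (diameter (U i) powr s)) = (\<Sum>i<N. ennreal (diameter (U i) powr s))"
        by (rule suminf_finite) (auto simp: dU)
      also have "\<dots> = (\<Sum>i<N. ennreal ((1 / real N) powr s))" by (simp add: dU)
      also have "\<dots> = ennreal (real N * (1 / real N) powr s)" by (simp add: ennreal_of_nat_eq_real_of_nat ennreal_mult)
      also have "real N * (1 / real N) powr s = real N powr (1 - s)"
        using N by (simp add: powr_divide powr_diff)
      finally have "(\<Sum>i. ennreal (diameter (U i) powr s)) = ennreal (real N powr (1 - s))" .
      moreover have "(INF U\<in>?C. (\<Sum>i. ennreal (diameter (U i) powr s))) \<le> (\<Sum>i. ennreal (diameter (U i) powr s))"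
        by (rule INF_lower[OF UC])
      ultimately have "(INF U\<in>?C. (\<Sum>i. ennreal (diameter (U i) powr s))) \<le> ennreal (real N powr (1 - s))"
        by simp
      also have "\<dots> \<le> ennreal e" using N by (intro ennreal_leI) simp
      finally show ?thesis by simp
    qed
    hence "(INF U\<in>?C. (\<Sum>i. ennreal (diameter (U i) powr s))) \<le> 0" by (rule ennreal_le_epsilon)
    thus ?thesis by simp
  qed
  have "hausdorff_measure s A \<le> 0" unfolding hausdorff_measure_def
    by (rule SUP_least) (simp add: inf0)
  thus ?thesis by simp
qed

theorem theorem4p8:
  shows "hausdorff_dim {q. 0 < q \<and> q < 1 \<and>
           (\<exists>!X. (\<exists>S. S \<noteq> {} \<and> X = gap_shift S) \<and> entropy X = q)} = 1"
proof -
  let ?A = "{q. 0 < q \<and> q < 1 \<and> (\<exists>!X. (\<exists>S. S \<noteq> {} \<and> X = gap_shift S) \<and> entropy X = q)}"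
  have AA: "?A = Aset" unfolding Aset_def ..
  have Asub: "?A \<subseteq> {0..1}" by auto
  let ?Z = "{s. 0 \<le> s \<and> hausdorff_measure s ?A = 0}"
  have up: "s \<in> ?Z" if "s > 1" for s using hm_upper[OF Asub that] that by simp
  have low: "1 \<le> s" if "s \<in> ?Z" for s
  proof (rule ccontr)
    assume "\<not> 1 \<le> s"
    hence s1: "s < 1" by simp
    have s0: "0 \<le> s" and z: "hausdorff_measure s ?A = 0" using that by auto
    define k where "k = nat \<lceil>2 * s / (1 - s)\<rceil> + 1"
    have k: "k > 0" unfolding k_def by simp
    have "2 * s / (1 - s) \<le> real k" unfolding k_def by linarith
    hence "2 * s \<le> real k * (1 - s)" using s1 by (simp add: divide_simps)
    hence h: "s * (real k + 2) \<le> real k" by (simp add: algebra_simps)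
    have rk: "real (k + 2) = real k + 2" by simp
    have "s * real (k + 2) \<le> real k" unfolding rk by (rule h)
    hence sk: "s \<le> real k / real (k + 2)" by (subst pos_le_divide_eq) auto
    have "range (qw k) \<subseteq> ?A" using qw_in_A[OF k] AA by auto
    hence "ennreal (1 / 2 ^ (2*k+14)) \<le> hausdorff_measure s ?A" by (rule hm_lower[OF k s0 sk])
    thus False using z by simp
  qed
  have ne: "?Z \<noteq> {}" using up[of 2] by (metis empty_iff one_less_numeral_iff semiring_norm(76))
  have bdd: "bdd_below ?Z" using low by (auto intro: bdd_belowI)
  have "Inf ?Z = 1"
  proof (rule antisym)
    show "1 \<le> Inf ?Z" by (rule cInf_greatest[OF ne]) (use low in auto)
    show "Inf ?Z \<le> 1"
    proof (rule field_le_epsilon)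
      fix e :: real assume e: "0 < e"
      show "Inf ?Z \<le> 1 + e" by (rule cInf_lower[OF _ bdd]) (use up e in auto)
    qed
  qed
  thus ?thesis unfolding hausdorff_dim_def .
qed

end
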